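(* Let $\Phi$ be a homogeneous Poisson point process of intensity $1$ in $\mathbb{R}^2$ with an additional point added at the origin $o$, and let $\Psi$ be an independent homogeneous Poisson point process of intensity $\lambda>0$ in $\mathbb{R}^2$. Fix $r>0$. Let $\vec G_{\lambda,r}$ be the directed graph on $\Phi$ containing $\overrightarrow{xy}$ ($x\ne y$) iff $\|x-y\|\le r$ and the closed disk of radius $\|x-y\|$ centered at $x$ contains no point of $\Psi$; let $G_{\lambda,r}$ (basic graph) contain the undirected edge $xy$ iff both $\overrightarrow{xy}$ and $\overrightarrow{yx}$ are in $\vec G_{\lambda,r}$, and $G'_{\lambda,r}$ (enhanced graph) contain $xy$ iff at least one of them is. Let $N$ and $N'$ be the degrees of $o$ in $G_{\lambda,r}$ and $G'_{\lambda,r}$. Then $$\frac{\mathbb{E}N}{\mathbb{E}N'}\ \ge\ \frac{3\pi}{5\pi+3\sqrt3}\approx 0.45,$$ i.e. at least this fraction of the edges of the enhanced graph are present in the basic graph. *)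

theory Defs
  imports "HOL-Probability.Probability"
begin

type_synonym pt = "real ^ 2"

definition cnt :: "pt set \<Rightarrow> pt set \<Rightarrow> nat" where
  "cnt X B = card (X \<inter> B)"

definition poisson_counts :: "'o measure \<Rightarrow> ('o \<Rightarrow> pt set) \<Rightarrow> real \<Rightarrow> bool" where
  "poisson_counts M X lam \<longleftrightarrow>
     (\<forall>\<omega>\<in>space M. \<forall>B. bounded B \<longrightarrow> finite (X \<omega> \<inter> B)) \<and>
     (\<forall>B \<in> sets lborel. bounded B \<longrightarrow>
        (\<lambda>\<omega>. cnt (X \<omega>) B) \<in> measurable M (count_space UNIV) \<and>
        (\<forall>k::nat. measure M {\<omega>\<in>space M. cnt (X \<omega>) B = k} =
            (lam * measure lborel B) ^ k / fact k * exp (- (lam * measure lborel B))))"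

text \<open>Joint independence: for any finite families of pairwise disjoint bounded Borel sets
  B_0..B_{n-1} and C_0..C_{n-1}, the counts of X in the B_i and of Y in the C_j are all
  mutually independent (independent increments of each process, and independence
  of the two processes).\<close>
definition indep_counts :: "'o measure \<Rightarrow> ('o \<Rightarrow> pt set) \<Rightarrow> ('o \<Rightarrow> pt set) \<Rightarrow> bool" where
  "indep_counts M X Y \<longleftrightarrow>
     (\<forall>(B :: nat \<Rightarrow> pt set) (C :: nat \<Rightarrow> pt set) n.
        (\<forall>i<n. B i \<in> sets lborel \<and> bounded (B i) \<and> C i \<in> sets lborel \<and> bounded (C i)) \<and>
        disjoint_family_on B {..<n} \<and> disjoint_family_on C {..<n} \<longrightarrow>
        prob_space.indep_vars M (\<lambda>_. count_space (UNIV :: nat set))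
          (\<lambda>i. case i of Inl j \<Rightarrow> (\<lambda>\<omega>. cnt (X \<omega>) (B j)) | Inr j \<Rightarrow> (\<lambda>\<omega>. cnt (Y \<omega>) (C j)))
          ({..<n} <+> {..<n}))"

definition dir_edge :: "real \<Rightarrow> pt set \<Rightarrow> pt \<Rightarrow> pt \<Rightarrow> bool" where
  "dir_edge r Psi x y \<longleftrightarrow> x \<noteq> y \<and> dist x y \<le> r \<and> cball x (dist x y) \<inter> Psi = {}"

definition deg_basic :: "real \<Rightarrow> pt set \<Rightarrow> pt set \<Rightarrow> nat" where
  "deg_basic r Phi Psi = card {y \<in> Phi. dir_edge r Psi 0 y \<and> dir_edge r Psi y 0}"

definition deg_enh :: "real \<Rightarrow> pt set \<Rightarrow> pt set \<Rightarrow> nat" where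
  "deg_enh r Phi Psi = card {y \<in> Phi. dir_edge r Psi 0 y \<or> dir_edge r Psi y 0}"

end

theory Submission
  imports Defs
begin


lemma inner2: "(x::pt) \<bullet> y = x$1 * y$1 + x$2 * y$2"
  by (simp add: inner_vec_def sum_2)

lemma norm2: "norm (x::pt) = sqrt (x$1^2 + x$2^2)"
  by (simp add: norm_eq_sqrt_inner inner2 power2_eq_square)

lemma pt_eq: "(x::pt) = y \<longleftrightarrow> x$1 = y$1 \<and> x$2 = y$2"
  by (simp add: vec_eq_iff forall_2)

definition mk :: "real \<Rightarrow> real \<Rightarrow> pt" where "mk a b = vector [a,b]"
lemma mk_simps[simp]: "mk a b $ 1 = a" "mk a b $ 2 = b"
  by (simp_all add: mk_def)

lemma s3: "sqrt 3 * sqrt 3 = (3::real)" "sqrt 3 * (sqrt 3 * x) = 3 * (x::real)"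
  by (simp_all add: mult.assoc[symmetric])

definition rho :: "pt \<Rightarrow> pt" where
  "rho z = mk (- z$1 / 2 - sqrt 3 / 2 * z$2) (sqrt 3 / 2 * z$1 - z$2 / 2)"

definition rhoM :: "real^2^2" where
  "rhoM = vector [vector [-1/2, - sqrt 3/2], vector [sqrt 3/2, -1/2]]"

lemma rho_mat: "rho = (\<lambda>z. rhoM *v z)"
  by (auto simp: rho_def rhoM_def pt_eq matrix_vector_mult_def sum_2 fun_eq_iff)

lemma rho_orth: "orthogonal_transformation rho"
  unfolding orthogonal_transformation_def
proof
  show "linear rho" unfolding rho_mat by (rule matrix_vector_mul_linear)
  show "\<forall>v w. rho v \<bullet> rho w = v \<bullet> w"
    apply (simp add: inner2 rho_def field_simps)
    done
qed

lemma rho3: "rho (rho (rho z)) = z"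
  apply (simp add: rho_def pt_eq field_simps)
  apply (simp add: right_diff_distrib distrib_left mult.assoc[symmetric])
  done

lemma norm_rho: "norm (rho z) = norm z"
  using rho_orth orthogonal_transformation_norm by blast

definition sector :: "real \<Rightarrow> pt \<Rightarrow> pt set" where
  "sector R u = {z. norm z \<le> R \<and> norm z \<le> 2 * (z \<bullet> u)}"

lemma three_alg:
  fixes a b m t :: real
  assumes "a^2 + b^2 = m^2" "m \<ge> 0" "t*t = 3" "t > 0"
  shows "m \<le> 2*a \<or> m \<le> -a + t*b \<or> m \<le> -a - t*b"
proof (rule ccontr)
  assume H: "\<not> ?thesis"
  have am: "a \<ge> -m" using assms
  proof -
    have "a^2 \<le> m^2" using assms(1) by (metis le_add_same_cancel1 zero_le_power2)
    then have "(-a)^2 \<le> m^2" by simp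
    then show ?thesis using power2_le_imp_le[of "-a" m] assms(2) by linarith
  qed
  have "(m-2*a)*((m+a)^2 - 3*b^2) > 0"
  proof -
    have "(m+a)^2 - 3*b^2 = (m + a - t*b)*(m+a+t*b)" using assms(3) by (simp add: algebra_simps power2_eq_square)
    then show ?thesis using H by simp
  qed
  moreover have "(m+a)^2 - 3*b^2 = 2*(2*a-m)*(a+m)" using assms(1) by (simp add: algebra_simps power2_eq_square)
  ultimately have "(m-2*a)*(2*(2*a-m)*(a+m)) > 0" by simp
  moreover have "(m-2*a)*(2*(2*a-m)*(a+m)) = -2*((m-2*a)^2*(a+m))" by (simp add: algebra_simps power2_eq_square)
  moreover have "(m-2*a)^2*(a+m) \<ge> 0" using am by simp
  ultimately show False by linarith
qed

lemma cover3:
  assumes u: "norm u = 1"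
  shows "cball 0 R \<subseteq> sector R u \<union> sector R (rho u) \<union> sector R (rho (rho u))"
proof
  fix z :: pt assume z: "z \<in> cball 0 R"
  define a where "a = z \<bullet> u"
  define b where "b = z$2 * u$1 - z$1 * u$2"
  have uu: "u$1^2 + u$2^2 = 1" using u by (simp add: norm2)
  have ab: "a^2 + b^2 = (norm z)^2"
  proof -
    have "a^2+b^2 = (z$1^2 + z$2^2) * (u$1^2 + u$2^2)" by (simp add: a_def b_def inner2 algebra_simps power2_eq_square)
    then show ?thesis using uu by (simp add: norm2)
  qed
  have e2: "z \<bullet> rho u = (-a + sqrt 3 * b)/2" by (simp add: a_def b_def inner2 rho_def field_simps)
  have e3: "z \<bullet> rho (rho u) = (-a - sqrt 3 * b)/2" by (simp add: a_def b_def inner2 rho_def field_simps)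
  from three_alg[OF ab norm_ge_zero s3(1)] have "norm z \<le> 2*a \<or> norm z \<le> -a + sqrt 3*b \<or> norm z \<le> -a - sqrt 3*b" by simp
  then show "z \<in> sector R u \<union> sector R (rho u) \<union> sector R (rho (rho u))"
    using z by (auto simp: sector_def e2 e3 a_def)
qed

lemma sector_rho: "sector R (rho v) \<subseteq> rho ` sector R v"
proof
  fix z assume z: "z \<in> sector R (rho v)"
  have "rho (rho z) \<bullet> v = z \<bullet> rho v"
    apply (simp add: inner2 rho_def field_simps)
    done
  then have "rho (rho z) \<in> sector R v" using z by (simp add: sector_def norm_rho)
  then show "z \<in> rho ` sector R v" using rho3[of z] by (metis image_eqI)
qed

lemma sector_closed: "closed (sector R u)"
  unfolding sector_def
  by (intro closed_Collect_conj closed_Collect_le continuous_intros)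

lemma sector_lmeas: "sector R u \<in> lmeasurable"
proof -
  have "sector R u \<subseteq> cball 0 R" by (auto simp: sector_def)
  then have "compact (sector R u)" using sector_closed
    by (meson bounded_cball bounded_subset compact_eq_bounded_closed)
  then show ?thesis by (rule lmeasurable_compact)
qed

lemma measure_cball2: assumes "r \<ge> 0" shows "measure lebesgue (cball (x::pt) r) = pi * r^2"
proof -
  have "Gamma (2::real) = 1" using Gamma_fact[of 1, where 'a=real] by simp
  moreover have "Henstock_Kurzweil_Integration.content (cball x r) = unit_ball_vol (DIM(pt)) * r ^ DIM(pt)" by (rule content_cball) (rule assms)
  ultimately show ?thesis by (simp add: unit_ball_vol_def)
qed

lemma sector_measure:
  assumes u: "norm u = 1" and R: "R \<ge> 0"
  shows "measure lebesgue (sector R u) \<ge> pi * R^2 / 3"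
proof -
  have m: "\<And>v. measure lebesgue (sector R (rho v)) \<le> measure lebesgue (sector R v)"
  proof -
    fix v
    have "measure lebesgue (sector R (rho v)) \<le> measure lebesgue (rho ` sector R v)"
      by (rule measure_mono_fmeasurable[OF sector_rho])
         (auto intro: fmeasurableD sector_lmeas measurable_orthogonal_image[OF rho_orth])
    also have "\<dots> = measure lebesgue (sector R v)"
      by (rule measure_orthogonal_image[OF rho_orth sector_lmeas])
    finally show "measure lebesgue (sector R (rho v)) \<le> measure lebesgue (sector R v)" .
  qed
  have "pi * R^2 = measure lebesgue (cball (0::pt) R)" using measure_cball2[OF R] by simp
  also have "\<dots> \<le> measure lebesgue (sector R u \<union> sector R (rho u) \<union> sector R (rho (rho u)))"
    by (rule measure_mono_fmeasurable[OF cover3[OF u]]) (auto intro: fmeasurableD sector_lmeas)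
  also have "\<dots> \<le> measure lebesgue (sector R u \<union> sector R (rho u)) + measure lebesgue (sector R (rho (rho u)))"
    by (rule measure_Un_le) (auto intro: fmeasurableD sector_lmeas)
  also have "\<dots> \<le> measure lebesgue (sector R u) + measure lebesgue (sector R (rho u)) + measure lebesgue (sector R (rho (rho u)))"
    using measure_Un_le[of "sector R u" lebesgue "sector R (rho u)"] by (auto intro: fmeasurableD sector_lmeas)
  also have "\<dots> \<le> 3 * measure lebesgue (sector R u)"
    using m[of u] m[of "rho u"] by linarith
  finally show ?thesis by simp
qed

lemma sqrt3_bound: "0 \<le> (x::real) \<Longrightarrow> y^2 \<le> 3*x^2 \<Longrightarrow> \<bar>y\<bar> \<le> sqrt 3 * x"
  by (metis real_sqrt_abs real_sqrt_le_mono real_sqrt_mult abs_of_nonneg)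

lemma lagrange2: "((z::pt) \<bullet> c)^2 + (c$1*z$2 - c$2*z$1)^2 = (norm z)^2 * (norm c)^2"
  by (simp add: inner2 norm2 algebra_simps power2_eq_square)

definition rhM :: "pt \<Rightarrow> real^2^2" where
  "rhM c = vector [vector [c$1/2 - sqrt 3/2 * c$2, c$1/2 + sqrt 3/2 * c$2],
                   vector [sqrt 3/2 * c$1 + c$2/2, - sqrt 3/2 * c$1 + c$2/2]]"

lemma det_rhM: "det (rhM c) = - sqrt 3 / 2 * (norm c)^2"
  by (simp add: det_2 rhM_def norm2 field_simps) (simp add: algebra_simps power2_eq_square)

lemma lens_inter:
  assumes c: "norm c = R" and R: "R > 0"
  shows "sector R (inverse R *\<^sub>R c) \<inter> (+) c ` sector R (- (inverse R *\<^sub>R c))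
          \<subseteq> (\<lambda>x. rhM c *v x) ` cbox 0 1"
proof
  fix z assume z: "z \<in> sector R (inverse R *\<^sub>R c) \<inter> (+) c ` sector R (- (inverse R *\<^sub>R c))"
  define x where "x = z \<bullet> c"
  define y where "y = c$1*z$2 - c$2*z$1"
  obtain w where w: "z = c + w" "w \<in> sector R (- (inverse R *\<^sub>R c))" using z by auto
  have z1: "norm z * R \<le> 2 * x" using z R by (auto simp: sector_def x_def field_simps)
  have w1: "norm w * R \<le> 2 * (R^2 - x)"
  proof -
    have "w \<bullet> c = x - R^2" using w(1) c by (simp add: x_def inner_diff_left power2_norm_eq_inner[symmetric] algebra_simps)
    then show ?thesis using w(2) R by (auto simp: sector_def field_simps)
  qed
  have zl: "x^2 + y^2 = (norm z * R)^2" using lagrange2[of z c] c by (simp add: x_def y_def power_mult_distrib)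
  have wl: "(x - R^2)^2 + y^2 = (norm w * R)^2"
  proof -
    have "w \<bullet> c = x - R^2" using w(1) c by (simp add: x_def inner_diff_left power2_norm_eq_inner[symmetric] algebra_simps)
    moreover have "c$1*w$2 - c$2*w$1 = y" using w(1) by (simp add: y_def algebra_simps)
    ultimately show ?thesis using lagrange2[of w c] c by (simp add: power_mult_distrib)
  qed
  have x0: "x \<ge> 0" using z1 R by (smt (verit) mult_nonneg_nonneg norm_ge_zero)
  have x1: "R^2 - x \<ge> 0" using w1 R by (smt (verit) mult_nonneg_nonneg norm_ge_zero)
  have "(norm z * R)^2 \<le> (2*x)^2" using z1 R by (intro power_mono) auto
  then have "y^2 \<le> 3*x^2" using zl by (simp add: power_mult_distrib)
  then have yb1: "\<bar>y\<bar> \<le> sqrt 3 * x" by (rule sqrt3_bound[OF x0])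
  have "(norm w * R)^2 \<le> (2*(R^2-x))^2" using w1 R by (intro power_mono) auto
  moreover have "(2*(R^2-x))^2 = 4 * (R^2-x)^2" "(x - R^2)^2 = (R^2-x)^2" by (simp_all add: power2_eq_square algebra_simps)
  ultimately have "y^2 \<le> 3*(R^2-x)^2" using wl by linarith
  then have yb2: "\<bar>y\<bar> \<le> sqrt 3 * (R^2-x)" by (rule sqrt3_bound[OF x1])
  define al where "al = x / R^2 + y / (sqrt 3 * R^2)"
  define be where "be = x / R^2 - y / (sqrt 3 * R^2)"
  have s3p: "sqrt 3 > 0" by simp
  have R2: "R^2 > 0" using R by simp
  have "al \<ge> 0" unfolding al_def using yb1 R2 s3p by (auto simp: field_simps)
  moreover have "be \<ge> 0" unfolding be_def using yb1 R2 s3p by (auto simp: field_simps)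
  moreover have "al \<le> 1" unfolding al_def using yb2 R2 s3p by (auto simp: field_simps)
  moreover have "be \<le> 1" unfolding be_def using yb2 R2 s3p by (auto simp: field_simps)
  moreover have "z = rhM c *v mk al be"
  proof -
    have cc: "c$1^2 + c$2^2 = R^2" using c by (simp add: norm2) (metis norm2 c real_sqrt_pow2 add_nonneg_nonneg zero_le_power2)
    have e1: "(c $ 1 / 2 - sqrt 3 * c $ 2 / 2) * al + (c $ 1 / 2 + sqrt 3 * c $ 2 / 2) * be = (al+be)*c$1/2 - (al-be) * sqrt 3*c$2/2"
      by (simp add: field_simps; simp add: algebra_simps)
    have e2: "(sqrt 3 * c $ 1 / 2 + c $ 2 / 2) * al + (c $ 2 / 2 - sqrt 3 * c $ 1 / 2) * be = (al+be)*c$2/2 + (al-be) * sqrt 3*c$1/2"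
      by (simp add: field_simps; simp add: algebra_simps)
    have sm: "al + be = 2*x/R^2" by (simp add: al_def be_def)
    have df: "(al - be) * sqrt 3 = 2*y/R^2" using s3p R2 by (simp add: al_def be_def field_simps)
    have k1: "(al+be)*c$1/2 - (al-be) * sqrt 3*c$2/2 = z$1"
    proof -
      have "(al+be)*c$1/2 - (al-be) * sqrt 3*c$2/2 = (2*x/R^2)*c$1/2 - (2*y/R^2)*c$2/2"
        by (simp only: sm df)
      also have "\<dots> = (x*c$1 - y*c$2)/R^2" using R2 by (simp add: field_simps)
      also have "x*c$1 - y*c$2 = z$1 * (c$1^2 + c$2^2)" by (simp add: x_def y_def inner2 algebra_simps power2_eq_square)
      also have "\<dots> = z$1 * R^2" using cc by simp
      finally show ?thesis using R2 by simp
    qed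
    have k2: "(al+be)*c$2/2 + (al-be) * sqrt 3*c$1/2 = z$2"
    proof -
      have "(al+be)*c$2/2 + (al-be) * sqrt 3*c$1/2 = (2*x/R^2)*c$2/2 + (2*y/R^2)*c$1/2"
        by (simp only: sm df)
      also have "\<dots> = (x*c$2 + y*c$1)/R^2" using R2 by (simp add: field_simps)
      also have "x*c$2 + y*c$1 = z$2 * (c$1^2 + c$2^2)" by (simp add: x_def y_def inner2 algebra_simps power2_eq_square)
      also have "\<dots> = z$2 * R^2" using cc by simp
      finally show ?thesis using R2 by simp
    qed
    show ?thesis
      by (simp add: pt_eq rhM_def matrix_vector_mult_def sum_2 e1 e2 k1 k2)
  qed
  ultimately show "z \<in> (\<lambda>x. rhM c *v x) ` cbox 0 1"
    by (auto simp: mem_box_cart intro!: image_eqI[where x="mk al be"] simp: forall_2)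
qed

lemma sector_sub1:
  assumes c: "norm c = R" and R: "R > 0"
  shows "sector R (inverse R *\<^sub>R c) \<subseteq> cball 0 R \<inter> cball c R"
proof
  fix z assume z: "z \<in> sector R (inverse R *\<^sub>R c)"
  have a: "norm z \<le> R" "norm z * R \<le> 2 * (z \<bullet> c)" using z R by (auto simp: sector_def field_simps)
  have "(norm (z - c))^2 = (norm z)^2 - 2 * (z \<bullet> c) + R^2"
    using c by (simp add: power2_norm_eq_inner inner_diff_left inner_diff_right inner_commute) (metis power2_norm_eq_inner)
  also have "\<dots> \<le> R^2"
  proof -
    have "(norm z)^2 \<le> norm z * R" using a(1) by (simp add: power2_eq_square mult_left_mono)
    then show ?thesis using a(2) by linarith
  qed
  finally have "norm (z - c) \<le> R" using R by (simp add: power2_le_iff_abs_le)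
  then show "z \<in> cball 0 R \<inter> cball c R" using a by (simp add: dist_norm norm_minus_commute)
qed

lemma sector_sub2:
  assumes c: "norm c = R" and R: "R > 0"
  shows "(+) c ` sector R (- (inverse R *\<^sub>R c)) \<subseteq> cball 0 R \<inter> cball c R"
proof
  fix z assume "z \<in> (+) c ` sector R (- (inverse R *\<^sub>R c))"
  then obtain w where w: "z = c + w" "w \<in> sector R (- (inverse R *\<^sub>R c))" by auto
  have a: "norm w \<le> R" "norm w * R \<le> - 2 * (w \<bullet> c)" using w R by (auto simp: sector_def field_simps)
  have "(norm (c + w))^2 = (norm w)^2 + 2 * (w \<bullet> c) + R^2"
    using c by (simp add: power2_norm_eq_inner inner_add_left inner_add_right inner_commute) (metis power2_norm_eq_inner)
  also have "\<dots> \<le> R^2"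
  proof -
    have "(norm w)^2 \<le> norm w * R" using a(1) by (simp add: power2_eq_square mult_left_mono)
    then show ?thesis using a(2) by linarith
  qed
  finally have "norm (c + w) \<le> R" using R by (simp add: power2_le_iff_abs_le)
  moreover have "norm (- c - w) = norm (c + w)" by (metis minus_add_distrib norm_minus_cancel diff_conv_add_uminus)
  ultimately show "z \<in> cball 0 R \<inter> cball c R" using a w by (simp add: dist_norm)
qed

lemma measure_unit_square: "measure lebesgue (cbox (0::pt) 1) = 1"
  proof -
  have "(0::pt) \<in> cbox 0 1" by (simp add: mem_box_cart)
  then have "cbox (0::pt) 1 \<noteq> {}" by blast
  then show ?thesis by (simp add: content_cbox_cart UNIV_2)
qed

lemma lens_measure:
  fixes c :: pt
  assumes c: "norm c = R" and R: "R > 0"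
  shows "measure lebesgue (cball 0 R \<inter> cball c R) \<ge> 2*pi*R^2/3 - sqrt 3/2 * R^2"
proof -
  define u :: pt where "u = inverse R *\<^sub>R c"
  have u: "norm u = 1" "norm (-u) = 1" using c R by (simp_all add: u_def)
  define S1 where "S1 = sector R u"
  define S2 where "S2 = (+) c ` sector R (-u)"
  have m1: "S1 \<in> lmeasurable" "S2 \<in> lmeasurable"
    by (simp_all add: S1_def S2_def sector_lmeas measurable_translation)
  have L: "cball 0 R \<inter> cball c R \<in> lmeasurable" by (simp add: fmeasurable.Int)
  have sub: "S1 \<union> S2 \<subseteq> cball 0 R \<inter> cball c R"
    using sector_sub1[OF c R] sector_sub2[OF c R] by (auto simp: S1_def S2_def u_def)
  have "measure lebesgue (S1 \<inter> S2) \<le> measure lebesgue ((\<lambda>x. rhM c *v x) ` cbox 0 1)"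
    apply (rule measure_mono_fmeasurable)
    using lens_inter[OF c R] apply (simp add: S1_def S2_def u_def)
    using m1 apply (simp add: fmeasurableD fmeasurable.Int)
    by (rule measurable_linear_image) (auto intro: matrix_vector_mul_linear)
  also have "\<dots> = sqrt 3 / 2 * R^2"
    by (subst measure_linear_image) (auto intro: matrix_vector_mul_linear simp: det_rhM measure_unit_square c)
  finally have i: "measure lebesgue (S1 \<inter> S2) \<le> sqrt 3 / 2 * R^2" .
  have "measure lebesgue (S1 \<union> S2) = measure lebesgue S1 + measure lebesgue S2 - measure lebesgue (S1 \<inter> S2)"
    using m1 by (rule measure_Un3)
  moreover have "measure lebesgue S2 = measure lebesgue (sector R (-u))"
    by (simp add: S2_def measure_translation)
  moreover have "measure lebesgue S1 \<ge> pi*R^2/3" "measure lebesgue (sector R (-u)) \<ge> pi*R^2/3"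
    using sector_measure u R by (auto simp: S1_def)
  moreover have "measure lebesgue (S1 \<union> S2) \<le> measure lebesgue (cball 0 R \<inter> cball c R)"
    using sub L m1 by (intro measure_mono_fmeasurable) (auto intro: fmeasurableD fmeasurable.Un)
  ultimately show ?thesis using i by linarith
qed

lemma union_measure:
  fixes g :: pt
  assumes g: "norm g \<le> R" and R: "R > 0"
  shows "measure lebesgue (cball 0 R \<union> cball g R) \<le> (4*pi/3 + sqrt 3/2) * R^2"
proof (cases "g = 0")
  case True
  have "0 \<le> sqrt 3 / 2 * R^2" "0 \<le> pi/3 * R^2" using pi_gt_zero by simp_all
  moreover have "(4*pi/3 + sqrt 3/2) * R^2 = pi*R^2 + (pi/3*R^2 + sqrt 3/2*R^2)" by (simp add: algebra_simps)
  moreover have "measure lebesgue (cball 0 R \<union> cball g R) = pi*R^2"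
    using True measure_cball2[of R 0] R by simp
  ultimately show ?thesis by linarith
next
  case False
  define c where "c = (R / norm g) *\<^sub>R g"
  have c: "norm c = R" using R False by (simp add: c_def)
  have sub: "cball 0 R \<inter> cball c R \<subseteq> cball 0 R \<inter> cball g R"
  proof
    fix z assume z: "z \<in> cball 0 R \<inter> cball c R"
    define t where "t = norm g / R"
    have t: "0 \<le> t" "t \<le> 1" using g R by (auto simp: t_def)
    have gc: "g = t *\<^sub>R c" using False R by (simp add: t_def c_def)
    have "z - g = (1 - t) *\<^sub>R z + t *\<^sub>R (z - c)" by (simp add: gc algebra_simps)
    then have "norm (z - g) \<le> norm ((1 - t) *\<^sub>R z) + norm (t *\<^sub>R (z - c))" by (metis norm_triangle_ineq)
    also have "\<dots> = (1-t) * norm z + t * norm (z - c)" using t by simp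
    also have "\<dots> \<le> (1-t) * R + t * R"
      using z t by (intro add_mono mult_left_mono) (auto simp: dist_norm norm_minus_commute)
    finally show "z \<in> cball 0 R \<inter> cball g R" using z by (simp add: dist_norm norm_minus_commute algebra_simps)
  qed
  have "measure lebesgue (cball 0 R \<inter> cball c R) \<le> measure lebesgue (cball 0 R \<inter> cball g R)"
    using sub by (intro measure_mono_fmeasurable) (auto intro: fmeasurableD fmeasurable.Int)
  moreover have "measure lebesgue (cball 0 R \<union> cball g R) = measure lebesgue (cball (0::pt) R) + measure lebesgue (cball g R) - measure lebesgue (cball 0 R \<inter> cball g R)"
    by (rule measure_Un3) auto
  moreover note lens_measure[OF c R] measure_cball2[OF less_imp_le[OF R], of 0] measure_cball2[OF less_imp_le[OF R], of g]
  moreover have "(4*pi/3 + sqrt 3/2)*R^2 = 2*(pi*R^2) - (2*pi*R^2/3 - sqrt 3/2*R^2)" by (simp add: algebra_simps)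
  ultimately show ?thesis by linarith
qed


lemma nn_integral_superadd:
  "integral\<^sup>N M f + integral\<^sup>N M g \<le> (\<integral>\<^sup>+x. f x + g x \<partial>M)"
proof -
  let ?A = "{a. simple_function M a \<and> a \<le> f}" and ?B = "{b. simple_function M b \<and> b \<le> g}"
  have ne: "?A \<noteq> {}" "?B \<noteq> {}" by (auto intro!: exI[of _ "\<lambda>_. 0"] simp: le_fun_def)
  have "(SUP a\<in>?A. integral\<^sup>S M a) + (SUP b\<in>?B. integral\<^sup>S M b) = (SUP b\<in>?B. SUP a\<in>?A. integral\<^sup>S M a + integral\<^sup>S M b)"
    by (simp add: ennreal_SUP_add_left[OF ne(1), symmetric] ennreal_SUP_add_right[OF ne(2)])
  also have "\<dots> \<le> (\<integral>\<^sup>+x. f x + g x \<partial>M)"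
  proof (intro SUP_least)
    fix a b assume a: "a \<in> ?A" and b: "b \<in> ?B"
    have "integral\<^sup>S M a + integral\<^sup>S M b = integral\<^sup>S M (\<lambda>x. a x + b x)"
      using a b by simp
    also have "\<dots> \<le> (\<integral>\<^sup>+x. f x + g x \<partial>M)"
      unfolding nn_integral_def
      by (rule SUP_upper) (use a b in \<open>auto simp: le_fun_def intro: add_mono\<close>)
    finally show "integral\<^sup>S M a + integral\<^sup>S M b \<le> (\<integral>\<^sup>+x. f x + g x \<partial>M)" .
  qed
  finally show ?thesis unfolding nn_integral_def .
qed

lemma exp_mean_sums: "(\<lambda>k. real k * (m ^ k / fact k * exp (- m))) sums m"
proof -
  have "(\<lambda>n. m * (m^n / fact n)) sums (m * exp m)"
    using sums_mult[OF exp_converges[of m], of m] by (simp add: divide_inverse mult_ac)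
  moreover have "\<And>n. real (Suc n) * (m ^ Suc n / fact (Suc n)) = m * (m^n / fact n)"
  proof -
    fix n
    have "fact (Suc n) = real (Suc n) * (fact n :: real)" by (simp only: fact_Suc of_nat_id)
    then show "real (Suc n) * (m ^ Suc n / fact (Suc n)) = m * (m^n / fact n)"
      by (simp del: of_nat_Suc)
  qed
  ultimately have "(\<lambda>n. real (Suc n) * (m ^ Suc n / fact (Suc n))) sums (m * exp m)"
    by simp
  then have "(\<lambda>k. real k * (m ^ k / fact k)) sums (m * exp m + 0)"
    using sums_Suc[where f="\<lambda>k. real k * (m ^ k / fact k)" and l="m * exp m"] by simp
  from sums_mult2[OF this, of "exp (-m)"] show ?thesis
    by (simp add: mult.assoc exp_minus field_simps)
qed

context
  fixes M :: "'o measure" and X :: "'o \<Rightarrow> pt set" and l :: real and B :: "pt set"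
  assumes P: "prob_space M" and pc: "poisson_counts M X l" and l: "l \<ge> 0"
     and B: "B \<in> sets lborel" "bounded B"
begin

lemma cnt_meas: "(\<lambda>\<omega>. cnt (X \<omega>) B) \<in> measurable M (count_space UNIV)"
  using pc B by (auto simp: poisson_counts_def)

lemma cnt_dist: "measure M {\<omega>\<in>space M. cnt (X \<omega>) B = k} = (l * measure lborel B) ^ k / fact k * exp (- (l * measure lborel B))"
  using pc B by (auto simp: poisson_counts_def)

lemma cnt_sets: "{\<omega>\<in>space M. cnt (X \<omega>) B = k} \<in> sets M"
proof -
  have "(\<lambda>\<omega>. cnt (X \<omega>) B) -` {k} \<inter> space M \<in> sets M" by (rule measurable_sets[OF cnt_meas]) simp
  moreover have "(\<lambda>\<omega>. cnt (X \<omega>) B) -` {k} \<inter> space M = {\<omega>\<in>space M. cnt (X \<omega>) B = k}" by auto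
  ultimately show ?thesis by simp
qed

lemma cnt_emeasure: "emeasure M {\<omega>\<in>space M. cnt (X \<omega>) B = k} = ennreal ((l * measure lborel B) ^ k / fact k * exp (- (l * measure lborel B)))"
  using finite_measure.emeasure_eq_measure[OF prob_space.finite_measure[OF P]] cnt_dist by simp

lemma cnt_mean: "(\<integral>\<^sup>+\<omega>. of_nat (cnt (X \<omega>) B) \<partial>M) = ennreal (l * measure lborel B)"
proof -
  define m where "m = l * measure lborel B"
  have m0: "m \<ge> 0" using l by (simp add: m_def)
  have "(\<integral>\<^sup>+\<omega>. of_nat (cnt (X \<omega>) B) \<partial>M) = (\<integral>\<^sup>+\<omega>. (\<Sum>k. of_nat k * indicator {\<omega>\<in>space M. cnt (X \<omega>) B = k} \<omega>) \<partial>M)"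
  proof (rule nn_integral_cong)
    fix \<omega> assume "\<omega> \<in> space M"
    then have "(\<Sum>k. (of_nat k::ennreal) * indicator {\<omega>\<in>space M. cnt (X \<omega>) B = k} \<omega>) = (\<Sum>k. if k = cnt (X \<omega>) B then of_nat (cnt (X \<omega>) B) else 0)"
      by (intro suminf_cong) (auto simp: indicator_def)
    also have "\<dots> = of_nat (cnt (X \<omega>) B)" by (rule sums_unique[OF sums_single, symmetric])
    finally show "of_nat (cnt (X \<omega>) B) = (\<Sum>k. (of_nat k::ennreal) * indicator {\<omega>\<in>space M. cnt (X \<omega>) B = k} \<omega>)" by simp
  qed
  also have "\<dots> = (\<Sum>k. \<integral>\<^sup>+\<omega>. of_nat k * indicator {\<omega>\<in>space M. cnt (X \<omega>) B = k} \<omega> \<partial>M)"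
    by (rule nn_integral_suminf) (auto intro!: borel_measurable_indicator borel_measurable_times_ennreal cnt_sets)
  also have "\<dots> = (\<Sum>k. ennreal (real k * (m ^ k / fact k * exp (- m))))"
    using cnt_sets apply (simp add: nn_integral_cmult_indicator cnt_emeasure m_def)
    apply (intro suminf_cong)
    by (simp add: ennreal_of_nat_eq_real_of_nat ennreal_mult'[symmetric])
  also have "\<dots> = ennreal m"
    using exp_mean_sums[of m] m0
    by (subst suminf_ennreal2) (auto simp: sums_iff)
  finally show ?thesis by (simp add: m_def)
qed

lemma cnt_void: "emeasure M {\<omega>\<in>space M. cnt (X \<omega>) B = 0} = ennreal (exp (- (l * measure lborel B)))"
  using cnt_emeasure[of 0] by simp

end


lemma indep_prod:
  fixes M :: "'o measure" and Phi Psi :: "'o \<Rightarrow> pt set" and Q U :: "pt set" and F G :: "nat \<Rightarrow> real"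
  assumes P: "prob_space M" and ic: "indep_counts M Phi Psi"
    and Q: "Q \<in> sets lborel" "bounded Q" and U: "U \<in> sets lborel" "bounded U"
    and F: "\<And>k. F k \<ge> 0" and G: "\<And>k. G k \<ge> 0"
  shows "(\<integral>\<^sup>+\<omega>. ennreal (F (cnt (Phi \<omega>) Q)) * ennreal (G (cnt (Psi \<omega>) U)) \<partial>M)
       = (\<integral>\<^sup>+\<omega>. ennreal (F (cnt (Phi \<omega>) Q)) \<partial>M) * (\<integral>\<^sup>+\<omega>. ennreal (G (cnt (Psi \<omega>) U)) \<partial>M)"
proof -
  let ?I = "{..<1::nat} <+> {..<1::nat}"
  define Xs :: "nat + nat \<Rightarrow> 'o \<Rightarrow> nat" where "Xs = (\<lambda>i. case i of Inl j \<Rightarrow> (\<lambda>\<omega>. cnt (Phi \<omega>) ((\<lambda>_. Q) j)) | Inr j \<Rightarrow> (\<lambda>\<omega>. cnt (Psi \<omega>) ((\<lambda>_. U) j)))"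
  have iv: "prob_space.indep_vars M (\<lambda>_. count_space (UNIV :: nat set)) Xs ?I"
    using ic Q U unfolding indep_counts_def Xs_def
    by (elim allE[of _ "\<lambda>_. Q"] allE[of _ "\<lambda>_. U"] allE[of _ 1]) (auto simp: disjoint_family_on_def)
  define Y :: "nat + nat \<Rightarrow> nat \<Rightarrow> ennreal" where "Y = (\<lambda>i. case i of Inl (j::nat) \<Rightarrow> (\<lambda>k. ennreal (F k)) | Inr (j::nat) \<Rightarrow> (\<lambda>k. ennreal (G k)))"
  have iv2: "prob_space.indep_vars M (\<lambda>_. borel) (\<lambda>i x. Y i (Xs i x)) ?I"
    by (rule prob_space.indep_vars_compose2[OF P iv]) auto
  have "(\<integral>\<^sup>+\<omega>. (\<Prod>i\<in>?I. Y i (Xs i \<omega>)) \<partial>M) = (\<Prod>i\<in>?I. \<integral>\<^sup>+\<omega>. Y i (Xs i \<omega>) \<partial>M)"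
    by (rule prob_space.indep_vars_nn_integral[OF P _ iv2]) auto
  moreover have "?I = {Inl 0, Inr 0}" by (auto simp: lessThan_def)
  ultimately show ?thesis
    by (simp add: Y_def Xs_def)
qed


definition sq :: "real \<Rightarrow> int \<times> int \<Rightarrow> pt set" where
  "sq d ij = {y. of_int (fst ij) * d \<le> y$1 \<and> y$1 < of_int (fst ij + 1) * d \<and>
                 of_int (snd ij) * d \<le> y$2 \<and> y$2 < of_int (snd ij + 1) * d}"

definition crn :: "real \<Rightarrow> int \<times> int \<Rightarrow> pt" where
  "crn d ij = mk (of_int (fst ij) * d) (of_int (snd ij) * d)"

definition fl :: "real \<Rightarrow> pt \<Rightarrow> int \<times> int" where
  "fl d y = (\<lfloor>y$1 / d\<rfloor>, \<lfloor>y$2 / d\<rfloor>)"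

definition idx :: "real \<Rightarrow> real \<Rightarrow> (int \<times> int) set" where
  "idx d r = {- (\<lceil>r/d\<rceil>+1) .. \<lceil>r/d\<rceil>+1} \<times> {- (\<lceil>r/d\<rceil>+1) .. \<lceil>r/d\<rceil>+1}"

lemma finite_idx: "finite (idx d r)" by (simp add: idx_def)

lemma floor_eq_iff': "d > 0 \<Longrightarrow> of_int i * d \<le> x \<and> x < of_int (i+1) * d \<longleftrightarrow> \<lfloor>x / d\<rfloor> = i"
  by (simp add: floor_eq_iff field_simps)

lemma floor_eq_iff'': "d > 0 \<Longrightarrow> (of_int i * d \<le> x \<and> x < (of_int i + 1) * d) \<longleftrightarrow> \<lfloor>x / d\<rfloor> = i"
  by (simp add: floor_eq_iff field_simps)

lemma sq_iff: assumes "d > 0" shows "y \<in> sq d ij \<longleftrightarrow> fl d y = ij"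
proof (cases ij)
  case (Pair a b)
  show ?thesis using floor_eq_iff''[OF assms, of a "y$1"] floor_eq_iff''[OF assms, of b "y$2"] Pair
    by (auto simp: sq_def fl_def)
qed

lemma in_sq_fl: "d > 0 \<Longrightarrow> y \<in> sq d (fl d y)"
  by (simp add: sq_iff)

lemma sq_disj: "d > 0 \<Longrightarrow> ij \<noteq> kl \<Longrightarrow> sq d ij \<inter> sq d kl = {}"
  by (auto simp: sq_iff)

lemma sq_crn: assumes d: "d > 0" and y: "y \<in> sq d ij" shows "norm (y - crn d ij) \<le> 2 * d"
proof -
  have a: "0 \<le> y$1 - of_int (fst ij) * d" "y$1 - of_int (fst ij) * d \<le> d"
          "0 \<le> y$2 - of_int (snd ij) * d" "y$2 - of_int (snd ij) * d \<le> d"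
    using y by (auto simp: sq_def algebra_simps)
  have "(y$1 - of_int (fst ij) * d)^2 \<le> d^2" "(y$2 - of_int (snd ij) * d)^2 \<le> d^2"
    using a by (auto intro!: power_mono)
  moreover have e: "(y - crn d ij)$1 = y$1 - of_int (fst ij) * d" "(y - crn d ij)$2 = y$2 - of_int (snd ij) * d"
    by (simp_all add: crn_def)
  moreover have "(2*d)^2 = d^2 + d^2 + d^2 + d^2" by (simp add: power2_eq_square)
  moreover have "0 \<le> d^2" by simp
  ultimately have "(y - crn d ij)$1^2 + (y - crn d ij)$2^2 \<le> (2*d)^2"
    unfolding e by linarith
  then have "sqrt ((y - crn d ij)$1^2 + (y - crn d ij)$2^2) \<le> sqrt ((2*d)^2)"
    by (rule real_sqrt_le_mono)
  moreover have "sqrt ((2*d)^2) = 2*d" by (subst real_sqrt_abs) (use d in simp)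
  ultimately have "sqrt ((y - crn d ij)$1^2 + (y - crn d ij)$2^2) \<le> 2*d"
    by linarith
  then show ?thesis by (simp add: norm2)
qed

lemma floor_range: assumes "- c \<le> (x::real)" "x \<le> c" shows "- (\<lceil>c\<rceil>+1) \<le> \<lfloor>x\<rfloor>" "\<lfloor>x\<rfloor> \<le> \<lceil>c\<rceil>+1"
proof -
  have f: "of_int \<lfloor>x\<rfloor> \<le> x" "x < of_int \<lfloor>x\<rfloor> + 1" by (simp_all add: floor_correct)
  have c: "c \<le> of_int \<lceil>c\<rceil>" by (simp add: le_of_int_ceiling)
  have "real_of_int \<lfloor>x\<rfloor> \<le> of_int (\<lceil>c\<rceil>+1)" using f c assms by (simp only: of_int_add of_int_1; linarith)
  then show "\<lfloor>x\<rfloor> \<le> \<lceil>c\<rceil>+1" by (simp only: of_int_le_iff)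
  have "real_of_int (- (\<lceil>c\<rceil>+1)) < of_int (\<lfloor>x\<rfloor> + 1)" using f c assms by (simp only: of_int_add of_int_1 of_int_minus; linarith)
  then have "- (\<lceil>c\<rceil>+1) < \<lfloor>x\<rfloor> + 1" by (simp only: of_int_less_iff)
  then show "- (\<lceil>c\<rceil>+1) \<le> \<lfloor>x\<rfloor>" by simp
qed

lemma fl_idx: assumes d: "d > 0" and y: "norm y \<le> r" shows "fl d y \<in> idx d r"
proof -
  have c: "\<bar>y$i\<bar> \<le> r" for i using y component_le_norm_cart[of y i] by simp
  have "- r \<le> y$i" "y$i \<le> r" for i using c[of i] by (auto simp: abs_le_iff)
  then have "- (r/d) \<le> y$i / d" "y$i / d \<le> r/d" for i
    using divide_right_mono[of "-r" "y$i" d] divide_right_mono[of "y$i" r d] d by auto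
  then have "- (\<lceil>r/d\<rceil>+1) \<le> \<lfloor>y$i / d\<rfloor>" "\<lfloor>y$i / d\<rfloor> \<le> \<lceil>r/d\<rceil>+1" for i
    using floor_range by blast+
  then show ?thesis by (simp add: fl_def idx_def)
qed

lemma sq_borel: "sq d ij \<in> sets lborel"
  unfolding sq_def by measurable

lemma sq_bounded: assumes "d > 0" shows "bounded (sq d ij)"
proof -
  have "sq d ij \<subseteq> cball (crn d ij) (2*d)"
  proof
    fix y assume "y \<in> sq d ij"
    from sq_crn[OF assms this] show "y \<in> cball (crn d ij) (2*d)" by (simp add: dist_norm norm_minus_commute)
  qed
  then show ?thesis using bounded_cball bounded_subset by blast
qed

lemma sq_measure: assumes d: "d > 0" shows "measure lborel (sq d ij) = d^2"
proof -
  define a where "a = crn d ij"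
  define b where "b = mk (of_int (fst ij + 1) * d) (of_int (snd ij + 1) * d)"
  have sub1: "box a b \<subseteq> sq d ij" by (auto simp: mem_box_cart forall_2 sq_def a_def b_def crn_def)
  have sub2: "sq d ij \<subseteq> cbox a b" by (auto simp: mem_box_cart forall_2 sq_def a_def b_def crn_def)
  have "a \<in> cbox a b" using d by (simp add: mem_box_cart forall_2 a_def b_def crn_def field_simps)
  then have "cbox a b \<noteq> {}" by blast
  then have mc: "measure lborel (cbox a b) = d^2" using d
    by (simp add: content_cbox_cart UNIV_2 a_def b_def crn_def algebra_simps power2_eq_square)
  have "emeasure lborel (box a b) = emeasure lborel (cbox a b)"
    by (simp add: emeasure_lborel_box_eq emeasure_lborel_cbox_eq)
  then have mb: "measure lborel (box a b) = d^2" using mc by (simp add: measure_def)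
  have cf: "cbox a b \<in> fmeasurable lborel" unfolding fmeasurable_def using emeasure_lborel_cbox_finite[of a b] by simp
  have sf: "sq d ij \<in> fmeasurable lborel" by (rule fmeasurableI2[OF cf sub2 sq_borel])
  have "measure lborel (box a b) \<le> measure lborel (sq d ij)"
    by (rule measure_mono_fmeasurable[OF sub1 _ sf]) simp
  moreover have "measure lborel (sq d ij) \<le> measure lborel (cbox a b)"
    by (rule measure_mono_fmeasurable[OF sub2 sq_borel cf])
  ultimately show ?thesis using mb mc by simp
qed

lemma crn_scale: "crn (s*d) ij = s *\<^sub>R crn d ij"
  by (simp add: crn_def pt_eq)


definition lfin :: "pt set \<Rightarrow> bool" where "lfin X \<longleftrightarrow> (\<forall>B. bounded B \<longrightarrow> finite (X \<inter> B))"

lemma cnt0_empty: "lfin X \<Longrightarrow> bounded B \<Longrightarrow> cnt X B = 0 \<Longrightarrow> X \<inter> B = {}"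
  by (auto simp: lfin_def cnt_def)

lemma cnt1_ne: "1 \<le> cnt X B \<Longrightarrow> X \<inter> B \<noteq> {}"
  by (auto simp: cnt_def)

definition Rb :: "real \<Rightarrow> int \<times> int \<Rightarrow> real" where "Rb d ij = norm (crn d ij) + 4*d"
definition Ub :: "real \<Rightarrow> int \<times> int \<Rightarrow> pt set" where "Ub d ij = cball 0 (Rb d ij) \<union> cball (crn d ij) (Rb d ij)"
definition vr :: "real \<Rightarrow> int \<times> int \<Rightarrow> real" where "vr d ij = norm (crn d ij) - 4*d"
definition VA :: "real \<Rightarrow> int \<times> int \<Rightarrow> pt set" where "VA d ij = ball 0 (vr d ij)"
definition VB :: "real \<Rightarrow> int \<times> int \<Rightarrow> pt set" where "VB d ij = ball (crn d ij) (vr d ij)"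
definition IU :: "real \<Rightarrow> real \<Rightarrow> (int \<times> int) set" where "IU d r = {ij \<in> idx d r. sq d ij \<inter> cball 0 r \<noteq> {}}"

lemma finite_IU: "finite (IU d r)" using finite_idx by (simp add: IU_def)

lemma sum_ind_card: "finite A \<Longrightarrow> (\<Sum>x\<in>A. if P x then 1 else 0 :: nat) = card {x\<in>A. P x}"
proof -
  assume "finite A"
  then have "(\<Sum>x\<in>A. if P x then 1 else 0 :: nat) = (\<Sum>x\<in>{x\<in>A. P x}. 1)"
    by (rule sum.inter_filter[symmetric])
  then show ?thesis by simp
qed

lemma lower_pw:
  assumes d: "d > 0" and I: "finite I" and Isub: "\<And>ij. ij \<in> I \<Longrightarrow> sq d ij \<subseteq> cball 0 r \<and> 0 \<notin> sq d ij"
    and lP: "lfin Phs" and lS: "lfin Ps"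
  shows "(\<Sum>ij\<in>I. (if 1 \<le> cnt Phs (sq d ij) \<and> cnt Ps (Ub d ij) = 0 then 1 else 0 :: nat)) \<le> deg_basic r (insert 0 Phs) Ps"
proof -
  define T where "T = {ij\<in>I. 1 \<le> cnt Phs (sq d ij) \<and> cnt Ps (Ub d ij) = 0}"
  define S where "S = {y \<in> insert 0 Phs. dir_edge r Ps 0 y \<and> dir_edge r Ps y 0}"
  have ex: "\<exists>y. y \<in> Phs \<inter> sq d ij" if "ij \<in> T" for ij using that cnt1_ne by (auto simp: T_def)
  define f where "f ij = (SOME y. y \<in> Phs \<inter> sq d ij)" for ij
  have f: "f ij \<in> Phs \<inter> sq d ij" if "ij \<in> T" for ij
    unfolding f_def using someI_ex[OF ex[OF that]] .
  have inj: "inj_on f T"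
  proof (rule inj_onI)
    fix ij kl assume "ij \<in> T" "kl \<in> T" "f ij = f kl"
    then have "f ij \<in> sq d ij" "f ij \<in> sq d kl" using f[of ij] f[of kl] by auto
    then show "ij = kl" by (simp add: sq_iff[OF d])
  qed
  have Ubb: "bounded (Ub d ij)" for ij by (simp add: Ub_def)
  have edge: "f ij \<in> S" if "ij \<in> T" for ij
  proof -
    let ?y = "f ij" and ?g = "crn d ij"
    have y: "?y \<in> Phs" "?y \<in> sq d ij" using f[OF that] by auto
    have IT: "ij \<in> I" "cnt Ps (Ub d ij) = 0" using that by (auto simp: T_def)
    have y0: "?y \<noteq> 0" using Isub[OF IT(1)] y by auto
    have yr: "norm ?y \<le> r" using Isub[OF IT(1)] y by auto
    have yg: "norm (?y - ?g) \<le> 2*d" using sq_crn[OF d y(2)] .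
    have em: "Ps \<inter> Ub d ij = {}" using cnt0_empty[OF lS Ubb IT(2)] .
    have c1: "cball 0 (norm ?y) \<subseteq> Ub d ij"
    proof -
      have "norm ?y \<le> norm ?g + 2*d" using yg norm_triangle_sub[of ?y ?g] by linarith
      then show ?thesis using d by (auto simp: Ub_def Rb_def)
    qed
    have c2: "cball ?y (norm ?y) \<subseteq> Ub d ij"
    proof
      fix z assume "z \<in> cball ?y (norm ?y)"
      then have "norm (z - ?y) \<le> norm ?y" by (simp add: dist_norm norm_minus_commute)
      moreover have "norm (z - ?g) \<le> norm (z - ?y) + norm (?y - ?g)" by (rule norm_diff_triangle_ineq[of z ?y ?y ?g, simplified])
      moreover have "norm ?y \<le> norm ?g + 2*d" using yg norm_triangle_sub[of ?y ?g] by linarith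
      ultimately have "norm (z - ?g) \<le> Rb d ij" using yg by (simp add: Rb_def)
      then show "z \<in> Ub d ij" by (simp add: Ub_def dist_norm norm_minus_commute)
    qed
    have d1: "dist 0 ?y = norm ?y" "dist ?y 0 = norm ?y" by (simp_all add: dist_norm)
    have "cball 0 (norm ?y) \<inter> Ps = {}" "cball ?y (norm ?y) \<inter> Ps = {}" using c1 c2 em by auto
    then show ?thesis using y y0 yr unfolding S_def dir_edge_def d1 by simp
  qed
  have finS: "finite S"
  proof -
    have "S \<subseteq> insert 0 (Phs \<inter> cball 0 r)" by (auto simp: S_def dir_edge_def dist_norm)
    moreover have "finite (Phs \<inter> cball 0 r)" using lP by (simp add: lfin_def)
    ultimately show ?thesis by (meson finite_insert finite_subset)
  qed
  have "(\<Sum>ij\<in>I. (if 1 \<le> cnt Phs (sq d ij) \<and> cnt Ps (Ub d ij) = 0 then 1 else 0 :: nat)) = card T"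
    using I by (simp add: sum_ind_card T_def)
  also have "\<dots> = card (f ` T)" using card_image[OF inj] by simp
  also have "\<dots> \<le> card S" using edge finS by (intro card_mono) auto
  finally show ?thesis by (simp add: deg_basic_def S_def)
qed

lemma upper_pw:
  assumes d: "d > 0" and A: "A \<subseteq> Phs \<inter> cball 0 r" and lP: "lfin Phs"
    and V: "\<And>ij y. y \<in> A \<Longrightarrow> y \<in> sq d ij \<Longrightarrow> Ps \<inter> V ij = {}"
  shows "card A \<le> (\<Sum>ij\<in>IU d r. cnt Phs (sq d ij) * (if cnt Ps (V ij) = 0 then 1 else 0))"
proof -
  have "finite (Phs \<inter> cball 0 r)" using lP by (simp add: lfin_def)
  then have finA: "finite A" using A finite_subset by blast
  have cov: "A = (\<Union>ij\<in>IU d r. A \<inter> sq d ij)"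
  proof (intro equalityI subsetI)
    fix y assume y: "y \<in> A"
    then have "norm y \<le> r" using A by auto
    then have "fl d y \<in> idx d r" by (rule fl_idx[OF d])
    moreover have "y \<in> sq d (fl d y)" by (rule in_sq_fl[OF d])
    ultimately have "fl d y \<in> IU d r" using \<open>norm y \<le> r\<close> by (auto simp: IU_def)
    then show "y \<in> (\<Union>ij\<in>IU d r. A \<inter> sq d ij)" using y in_sq_fl[OF d, of y] by blast
  qed auto
  have "card A = (\<Sum>ij\<in>IU d r. card (A \<inter> sq d ij))"
    apply (subst cov)
  proof (rule card_UN_disjoint[OF finite_IU])
    show "\<forall>i\<in>IU d r. finite (A \<inter> sq d i)" using finA by simp
    show "\<forall>i\<in>IU d r. \<forall>j\<in>IU d r. i \<noteq> j \<longrightarrow> A \<inter> sq d i \<inter> (A \<inter> sq d j) = {}"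
    proof (intro ballI impI)
      fix i j :: "int \<times> int" assume "i \<noteq> j"
      then have "sq d i \<inter> sq d j = {}" by (rule sq_disj[OF d])
      then show "A \<inter> sq d i \<inter> (A \<inter> sq d j) = {}" by blast
    qed
  qed
  also have "\<dots> \<le> (\<Sum>ij\<in>IU d r. cnt Phs (sq d ij) * (if cnt Ps (V ij) = 0 then 1 else 0))"
  proof (rule sum_mono)
    fix ij
    show "card (A \<inter> sq d ij) \<le> cnt Phs (sq d ij) * (if cnt Ps (V ij) = 0 then 1 else 0)"
    proof (cases "A \<inter> sq d ij = {}")
      case True then show ?thesis by simp
    next
      case False
      then obtain y where "y \<in> A" "y \<in> sq d ij" by auto
      then have "cnt Ps (V ij) = 0" using V by (simp add: cnt_def)
      moreover have "card (A \<inter> sq d ij) \<le> cnt Phs (sq d ij)"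
      proof -
        have "finite (Phs \<inter> sq d ij)" using lP sq_bounded[OF d] by (simp add: lfin_def)
        moreover have "A \<inter> sq d ij \<subseteq> Phs \<inter> sq d ij" using A by blast
        ultimately show ?thesis unfolding cnt_def by (rule card_mono)
      qed
      ultimately show ?thesis by simp
    qed
  qed
  finally show ?thesis .
qed

lemma VA_ok:
  assumes d: "d > 0" and y: "y \<in> sq d ij" and e: "cball 0 (norm y) \<inter> Ps = {}"
  shows "Ps \<inter> VA d ij = {}"
proof -
  have "norm (crn d ij) \<le> norm y + 2*d" using sq_crn[OF d y] norm_triangle_sub[of "crn d ij" y]
    by (simp add: norm_minus_commute)
  then have "VA d ij \<subseteq> cball 0 (norm y)" using d by (auto simp: VA_def vr_def)
  then show ?thesis using e by auto
qed

lemma VB_ok: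
  assumes d: "d > 0" and y: "y \<in> sq d ij" and e: "cball y (norm y) \<inter> Ps = {}"
  shows "Ps \<inter> VB d ij = {}"
proof -
  let ?g = "crn d ij"
  have yg: "norm (y - ?g) \<le> 2*d" using sq_crn[OF d y] .
  have "VB d ij \<subseteq> cball y (norm y)"
  proof
    fix z assume "z \<in> VB d ij"
    then have "norm (z - ?g) < norm ?g - 4*d" by (simp add: VB_def vr_def dist_norm norm_minus_commute)
    moreover have "norm (z - y) \<le> norm (z - ?g) + norm (?g - y)" by (rule norm_diff_triangle_ineq[of z ?g ?g y, simplified])
    moreover have "norm ?g \<le> norm y + 2*d" using yg norm_triangle_sub[of ?g y] by (simp add: norm_minus_commute)
    ultimately have "norm (z - y) \<le> norm y" using yg by (simp add: norm_minus_commute)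
    then show "z \<in> cball y (norm y)" by (simp add: dist_norm norm_minus_commute)
  qed
  then show ?thesis using e by auto
qed

lemma deg_sum:
  assumes lP: "lfin Phs"
  shows "deg_basic r (insert 0 Phs) Ps + deg_enh r (insert 0 Phs) Ps =
         card {y \<in> insert 0 Phs. dir_edge r Ps 0 y} + card {y \<in> insert 0 Phs. dir_edge r Ps y 0}"
proof -
  let ?A = "{y \<in> insert 0 Phs. dir_edge r Ps 0 y}" and ?B = "{y \<in> insert 0 Phs. dir_edge r Ps y 0}"
  have fin: "finite (Phs \<inter> cball 0 r)" using lP by (simp add: lfin_def)
  have "?A \<subseteq> Phs \<inter> cball 0 r" "?B \<subseteq> Phs \<inter> cball 0 r" by (auto simp: dir_edge_def dist_norm norm_minus_commute)
  then have f: "finite ?A" "finite ?B" using fin finite_subset by blast+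
  have "?A \<inter> ?B = {y \<in> insert 0 Phs. dir_edge r Ps 0 y \<and> dir_edge r Ps y 0}" by auto
  moreover have "?A \<union> ?B = {y \<in> insert 0 Phs. dir_edge r Ps 0 y \<or> dir_edge r Ps y 0}" by auto
  ultimately show ?thesis using card_Un_Int[OF f] by (simp add: deg_basic_def deg_enh_def)
qed


lemma measure_ball2: "measure lborel (ball (x::pt) \<rho>) = pi * (max 0 \<rho>)^2"
proof (cases "\<rho> \<ge> 0")
  case True
  have "Gamma (2::real) = 1" using Gamma_fact[of 1, where 'a=real] by simp
  moreover have "Henstock_Kurzweil_Integration.content (ball x \<rho>) = unit_ball_vol (DIM(pt)) * \<rho> ^ DIM(pt)"
    by (rule content_ball) (rule True)
  ultimately show ?thesis using True by (simp add: unit_ball_vol_def)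
next
  case False
  then show ?thesis by simp
qed

definition aa :: real where "aa = 4*pi/3 + sqrt 3/2"

locale PPsys =
  fixes M :: "'o measure" and Phi0 Psi :: "'o \<Rightarrow> pt set" and lam r :: real
  assumes P: "prob_space M"
    and lam: "lam > 0" and r: "r > 0"
    and pc1: "poisson_counts M Phi0 1"
    and pc2: "poisson_counts M Psi lam"
    and ic: "indep_counts M Phi0 Psi"
begin

lemma lf1: "\<omega> \<in> space M \<Longrightarrow> lfin (Phi0 \<omega>)"
  using pc1 by (simp add: poisson_counts_def lfin_def)

lemma lf2: "\<omega> \<in> space M \<Longrightarrow> lfin (Psi \<omega>)"
  using pc2 by (simp add: poisson_counts_def lfin_def)

lemma meas1: assumes B: "B \<in> sets lborel" "bounded B" shows "(\<lambda>\<omega>. h (cnt (Phi0 \<omega>) B) :: ennreal) \<in> borel_measurable M"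
proof -
  have "(\<lambda>\<omega>. cnt (Phi0 \<omega>) B) \<in> measurable M (count_space UNIV)" by (rule cnt_meas[OF P pc1 _ B]) simp
  then show ?thesis by (rule measurable_compose[OF _ borel_measurable_count_space])
qed

lemma meas2: assumes B: "B \<in> sets lborel" "bounded B" shows "(\<lambda>\<omega>. h (cnt (Psi \<omega>) B) :: ennreal) \<in> borel_measurable M"
proof -
  have "(\<lambda>\<omega>. cnt (Psi \<omega>) B) \<in> measurable M (count_space UNIV)" by (rule cnt_meas[OF P pc2 _ B]) (use lam in simp)
  then show ?thesis by (rule measurable_compose[OF _ borel_measurable_count_space])
qed

lemma EG: assumes "B \<in> sets lborel" "bounded B"
  shows "(\<integral>\<^sup>+\<omega>. ennreal (if cnt (Psi \<omega>) B = 0 then 1 else 0) \<partial>M) = ennreal (exp (- (lam * measure lborel B)))"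
proof -
  have "(\<integral>\<^sup>+\<omega>. ennreal (if cnt (Psi \<omega>) B = 0 then 1 else 0) \<partial>M) = (\<integral>\<^sup>+\<omega>. indicator {\<omega>\<in>space M. cnt (Psi \<omega>) B = 0} \<omega> \<partial>M)"
    by (rule nn_integral_cong) (simp add: indicator_def)
  also have "\<dots> = emeasure M {\<omega>\<in>space M. cnt (Psi \<omega>) B = 0}"
    using cnt_sets[OF P pc2 _ assms] lam by simp
  also have "\<dots> = ennreal (exp (- (lam * measure lborel B)))"
    using cnt_void[OF P pc2 _ assms] lam by simp
  finally show ?thesis .
qed

lemma EF: assumes B: "B \<in> sets lborel" "bounded B"
  shows "(\<integral>\<^sup>+\<omega>. ennreal (if 1 \<le> cnt (Phi0 \<omega>) B then 1 else 0) \<partial>M) = ennreal (1 - exp (- (measure lborel B)))"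
proof -
  let ?S = "{\<omega>\<in>space M. cnt (Phi0 \<omega>) B = 0}"
  have S: "?S \<in> sets M" using cnt_sets[OF P pc1 _ B] by simp
  have "(\<integral>\<^sup>+\<omega>. ennreal (if 1 \<le> cnt (Phi0 \<omega>) B then 1 else 0) \<partial>M) = (\<integral>\<^sup>+\<omega>. indicator (space M - ?S) \<omega> \<partial>M)"
    by (rule nn_integral_cong) (auto simp: indicator_def)
  also have "\<dots> = emeasure M (space M - ?S)"
    using S by simp
  also have "\<dots> = emeasure M (space M) - emeasure M ?S"
    using S by (intro emeasure_compl) (auto simp: cnt_void[OF P pc1 _ B])
  also have "\<dots> = ennreal 1 - ennreal (exp (- (measure lborel B)))"
    using cnt_void[OF P pc1 _ B] prob_space.emeasure_space_1[OF P] by simp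
  also have "\<dots> = ennreal (1 - exp (- (measure lborel B)))"
    by (rule ennreal_minus) simp
  finally show ?thesis .
qed

lemma EC: assumes B: "B \<in> sets lborel" "bounded B"
  shows "(\<integral>\<^sup>+\<omega>. ennreal (real (cnt (Phi0 \<omega>) B)) \<partial>M) = ennreal (measure lborel B)"
  using cnt_mean[OF P pc1 _ B] by (simp add: ennreal_of_nat_eq_real_of_nat)


lemma Ub_borel: "Ub d ij \<in> sets lborel" "bounded (Ub d ij)"
  by (auto simp: Ub_def intro!: borel_closed)

lemma Ub_measure: assumes d: "d > 0" shows "measure lborel (Ub d ij) \<le> aa * (Rb d ij)^2"
proof -
  have "measure lborel (Ub d ij) = measure lebesgue (Ub d ij)" using Ub_borel by simp
  also have "\<dots> \<le> aa * (Rb d ij)^2"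
    unfolding Ub_def aa_def
    by (rule union_measure) (use d in \<open>auto simp: Rb_def intro: add_nonneg_pos\<close>)
  finally show ?thesis .
qed

lemma lower_E:
  assumes d: "d > 0" and I: "finite I" and Isub: "\<And>ij. ij \<in> I \<Longrightarrow> sq d ij \<subseteq> cball 0 r \<and> 0 \<notin> sq d ij"
  shows "ennreal ((1 - exp (-(d^2))) * (\<Sum>ij\<in>I. exp (- (lam * aa * (Rb d ij)^2))))
         \<le> (\<integral>\<^sup>+\<omega>. of_nat (deg_basic r (insert 0 (Phi0 \<omega>)) (Psi \<omega>)) \<partial>M)"
proof -
  define F where "F k = (if 1 \<le> k then 1 else 0 :: real)" for k :: nat
  define G where "G k = (if k = 0 then 1 else 0 :: real)" for k :: nat
  have pw: "(\<Sum>ij\<in>I. ennreal (F (cnt (Phi0 \<omega>) (sq d ij))) * ennreal (G (cnt (Psi \<omega>) (Ub d ij))))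
            \<le> of_nat (deg_basic r (insert 0 (Phi0 \<omega>)) (Psi \<omega>))" if w: "\<omega> \<in> space M" for \<omega>
  proof -
    have "(\<Sum>ij\<in>I. ennreal (F (cnt (Phi0 \<omega>) (sq d ij))) * ennreal (G (cnt (Psi \<omega>) (Ub d ij))))
        = of_nat (\<Sum>ij\<in>I. (if 1 \<le> cnt (Phi0 \<omega>) (sq d ij) \<and> cnt (Psi \<omega>) (Ub d ij) = 0 then 1 else 0 :: nat))"
      unfolding of_nat_sum by (intro sum.cong) (auto simp: F_def G_def)
    also have "\<dots> \<le> of_nat (deg_basic r (insert 0 (Phi0 \<omega>)) (Psi \<omega>))"
      using lower_pw[OF d I Isub lf1[OF w] lf2[OF w]] by (rule of_nat_mono)
    finally show ?thesis .
  qed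
  have "(\<integral>\<^sup>+\<omega>. (\<Sum>ij\<in>I. ennreal (F (cnt (Phi0 \<omega>) (sq d ij))) * ennreal (G (cnt (Psi \<omega>) (Ub d ij)))) \<partial>M)
        = (\<Sum>ij\<in>I. \<integral>\<^sup>+\<omega>. ennreal (F (cnt (Phi0 \<omega>) (sq d ij))) * ennreal (G (cnt (Psi \<omega>) (Ub d ij))) \<partial>M)"
    by (rule nn_integral_sum)
       (auto intro!: borel_measurable_times_ennreal meas1 meas2 sq_borel sq_bounded[OF d] Ub_borel)
  also have "\<dots> = (\<Sum>ij\<in>I. ennreal (1 - exp (-(d^2))) * ennreal (exp (- (lam * measure lborel (Ub d ij)))))"
  proof (rule sum.cong)
    fix ij assume "ij \<in> I"
    have "(\<integral>\<^sup>+\<omega>. ennreal (F (cnt (Phi0 \<omega>) (sq d ij))) * ennreal (G (cnt (Psi \<omega>) (Ub d ij))) \<partial>M)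
       = (\<integral>\<^sup>+\<omega>. ennreal (F (cnt (Phi0 \<omega>) (sq d ij))) \<partial>M) * (\<integral>\<^sup>+\<omega>. ennreal (G (cnt (Psi \<omega>) (Ub d ij))) \<partial>M)"
      by (rule indep_prod[OF P ic sq_borel sq_bounded[OF d] Ub_borel]) (auto simp: F_def G_def)
    also have "\<dots> = ennreal (1 - exp (-(d^2))) * ennreal (exp (- (lam * measure lborel (Ub d ij))))"
      using EF[OF sq_borel sq_bounded[OF d], of ij] EG[OF Ub_borel, of d ij] sq_measure[OF d, of ij]
      by (simp add: F_def G_def)
    finally show "(\<integral>\<^sup>+\<omega>. ennreal (F (cnt (Phi0 \<omega>) (sq d ij))) * ennreal (G (cnt (Psi \<omega>) (Ub d ij))) \<partial>M)
       = ennreal (1 - exp (-(d^2))) * ennreal (exp (- (lam * measure lborel (Ub d ij))))" .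
  qed simp
  also have "\<dots> \<ge> (\<Sum>ij\<in>I. ennreal ((1 - exp (-(d^2))) * exp (- (lam * aa * (Rb d ij)^2))))"
  proof (rule sum_mono)
    fix ij
    have e0: "0 \<le> 1 - exp (-(d^2))" by simp
    have "exp (- (lam * aa * (Rb d ij)^2)) \<le> exp (- (lam * measure lborel (Ub d ij)))"
      using Ub_measure[OF d, of ij] lam by (simp add: mult_left_mono mult.assoc)
    then have "(1 - exp (-(d^2))) * exp (- (lam * aa * (Rb d ij)^2)) \<le> (1 - exp (-(d^2))) * exp (- (lam * measure lborel (Ub d ij)))"
      by (rule mult_left_mono[OF _ e0])
    then show "ennreal ((1 - exp (-(d^2))) * exp (- (lam * aa * (Rb d ij)^2))) \<le> ennreal (1 - exp (-(d^2))) * ennreal (exp (- (lam * measure lborel (Ub d ij))))"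
      by (simp add: ennreal_mult'[symmetric] e0)
  qed
  also have "(\<Sum>ij\<in>I. ennreal ((1 - exp (-(d^2))) * exp (- (lam * aa * (Rb d ij)^2)))) = ennreal ((1 - exp (-(d^2))) * (\<Sum>ij\<in>I. exp (- (lam * aa * (Rb d ij)^2))))"
    by (simp add: sum_distrib_left)
  finally have "ennreal ((1 - exp (-(d^2))) * (\<Sum>ij\<in>I. exp (- (lam * aa * (Rb d ij)^2))))
     \<le> (\<integral>\<^sup>+\<omega>. (\<Sum>ij\<in>I. ennreal (F (cnt (Phi0 \<omega>) (sq d ij))) * ennreal (G (cnt (Psi \<omega>) (Ub d ij)))) \<partial>M)" .
  also have "\<dots> \<le> (\<integral>\<^sup>+\<omega>. of_nat (deg_basic r (insert 0 (Phi0 \<omega>)) (Psi \<omega>)) \<partial>M)"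
    by (rule nn_integral_mono) (rule pw)
  finally show ?thesis .
qed


lemma V_borel: "VA d ij \<in> sets lborel" "bounded (VA d ij)" "VB d ij \<in> sets lborel" "bounded (VB d ij)"
  by (auto simp: VA_def VB_def intro!: borel_open)

lemma V_measure: "measure lborel (VA d ij) = pi * (max 0 (vr d ij))^2" "measure lborel (VB d ij) = pi * (max 0 (vr d ij))^2"
  by (simp_all add: VA_def VB_def measure_ball2)

lemma upper_one:
  assumes d: "d > 0" and that: "\<And>ij. V' ij \<in> sets lborel" "\<And>ij. bounded (V' ij)"
  shows "(\<integral>\<^sup>+\<omega>. (\<Sum>ij\<in>IU d r. ennreal (real (cnt (Phi0 \<omega>) (sq d ij)) * (if cnt (Psi \<omega>) (V' ij) = 0 then 1 else 0))) \<partial>M)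
      = (\<Sum>ij\<in>IU d r. ennreal (d^2 * exp (- (lam * measure lborel (V' ij)))))"
proof -
  have "(\<integral>\<^sup>+\<omega>. (\<Sum>ij\<in>IU d r. ennreal (real (cnt (Phi0 \<omega>) (sq d ij)) * (if cnt (Psi \<omega>) (V' ij) = 0 then 1 else 0))) \<partial>M)
      = (\<integral>\<^sup>+\<omega>. (\<Sum>ij\<in>IU d r. ennreal (real (cnt (Phi0 \<omega>) (sq d ij))) * ennreal (if cnt (Psi \<omega>) (V' ij) = 0 then 1 else 0)) \<partial>M)"
    by (intro nn_integral_cong sum.cong refl) (simp add: ennreal_mult')
  also have "\<dots> = (\<Sum>ij\<in>IU d r. \<integral>\<^sup>+\<omega>. ennreal (real (cnt (Phi0 \<omega>) (sq d ij))) * ennreal (if cnt (Psi \<omega>) (V' ij) = 0 then 1 else 0) \<partial>M)"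
    by (rule nn_integral_sum)
       (auto intro!: borel_measurable_times_ennreal meas1 meas2 sq_borel sq_bounded[OF d] that)
  also have "\<dots> = (\<Sum>ij\<in>IU d r. ennreal (d^2 * exp (- (lam * measure lborel (V' ij)))))"
  proof (rule sum.cong)
    fix ij
    have "(\<integral>\<^sup>+\<omega>. ennreal (real (cnt (Phi0 \<omega>) (sq d ij))) * ennreal (if cnt (Psi \<omega>) (V' ij) = 0 then 1 else 0) \<partial>M)
       = (\<integral>\<^sup>+\<omega>. ennreal (real (cnt (Phi0 \<omega>) (sq d ij))) \<partial>M) * (\<integral>\<^sup>+\<omega>. ennreal (if cnt (Psi \<omega>) (V' ij) = 0 then 1 else 0) \<partial>M)"
      by (rule indep_prod[OF P ic sq_borel sq_bounded[OF d] that, where F="\<lambda>k. real k" and G="\<lambda>k. if k = 0 then 1 else 0"]) auto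
    also have "\<dots> = ennreal (d^2 * exp (- (lam * measure lborel (V' ij))))"
      using EC[OF sq_borel sq_bounded[OF d], of ij] EG[OF that] sq_measure[OF d, of ij]
      by (simp add: ennreal_mult')
    finally show "(\<integral>\<^sup>+\<omega>. ennreal (real (cnt (Phi0 \<omega>) (sq d ij))) * ennreal (if cnt (Psi \<omega>) (V' ij) = 0 then 1 else 0) \<partial>M)
       = ennreal (d^2 * exp (- (lam * measure lborel (V' ij))))" .
  qed simp
  finally show ?thesis .
qed


abbreviation "EN \<equiv> (\<integral>\<^sup>+\<omega>. of_nat (deg_basic r (insert 0 (Phi0 \<omega>)) (Psi \<omega>)) \<partial>M)"
abbreviation "EN' \<equiv> (\<integral>\<^sup>+\<omega>. of_nat (deg_enh r (insert 0 (Phi0 \<omega>)) (Psi \<omega>)) \<partial>M)"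

lemma upper_E:
  assumes d: "d > 0"
  shows "EN + EN' \<le> ennreal (2 * (\<Sum>ij\<in>IU d r. d^2 * exp (- (lam * (pi * (max 0 (vr d ij))^2)))))"
proof -
  define SA where "SA \<omega> = (\<Sum>ij\<in>IU d r. ennreal (real (cnt (Phi0 \<omega>) (sq d ij)) * (if cnt (Psi \<omega>) (VA d ij) = 0 then 1 else 0)))" for \<omega>
  define SB where "SB \<omega> = (\<Sum>ij\<in>IU d r. ennreal (real (cnt (Phi0 \<omega>) (sq d ij)) * (if cnt (Psi \<omega>) (VB d ij) = 0 then 1 else 0)))" for \<omega>
  have conv: "of_nat (\<Sum>ij\<in>IU d r. cnt X (sq d ij) * (if cnt Y (V ij) = 0 then 1 else 0)) =
        (\<Sum>ij\<in>IU d r. ennreal (real (cnt X (sq d ij)) * (if cnt Y (V ij) = 0 then 1 else 0)))" for X Y V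
    unfolding of_nat_sum by (intro sum.cong refl) (simp add: ennreal_of_nat_eq_real_of_nat)
  have pw: "of_nat (deg_basic r (insert 0 (Phi0 \<omega>)) (Psi \<omega>)) + of_nat (deg_enh r (insert 0 (Phi0 \<omega>)) (Psi \<omega>)) \<le> SA \<omega> + SB \<omega>"
    if w: "\<omega> \<in> space M" for \<omega>
  proof -
    let ?A = "{y \<in> insert 0 (Phi0 \<omega>). dir_edge r (Psi \<omega>) 0 y}" and ?B = "{y \<in> insert 0 (Phi0 \<omega>). dir_edge r (Psi \<omega>) y 0}"
    have cA: "card ?A \<le> (\<Sum>ij\<in>IU d r. cnt (Phi0 \<omega>) (sq d ij) * (if cnt (Psi \<omega>) (VA d ij) = 0 then 1 else 0))"
    proof (rule upper_pw[OF d _ lf1[OF w]])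
      show "?A \<subseteq> Phi0 \<omega> \<inter> cball 0 r" by (auto simp: dir_edge_def)
      fix ij y assume "y \<in> ?A" "y \<in> sq d ij"
      then show "Psi \<omega> \<inter> VA d ij = {}" by (intro VA_ok[OF d]) (auto simp: dir_edge_def dist_norm)
    qed
    have cB: "card ?B \<le> (\<Sum>ij\<in>IU d r. cnt (Phi0 \<omega>) (sq d ij) * (if cnt (Psi \<omega>) (VB d ij) = 0 then 1 else 0))"
    proof (rule upper_pw[OF d _ lf1[OF w]])
      show "?B \<subseteq> Phi0 \<omega> \<inter> cball 0 r" by (auto simp: dir_edge_def dist_norm norm_minus_commute)
      fix ij y assume "y \<in> ?B" "y \<in> sq d ij"
      then show "Psi \<omega> \<inter> VB d ij = {}" by (intro VB_ok[OF d]) (auto simp: dir_edge_def dist_norm)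
    qed
    have "of_nat (deg_basic r (insert 0 (Phi0 \<omega>)) (Psi \<omega>)) + of_nat (deg_enh r (insert 0 (Phi0 \<omega>)) (Psi \<omega>))
        = (of_nat (card ?A + card ?B) :: ennreal)"
      using deg_sum[OF lf1[OF w], of r "Psi \<omega>"] by (metis of_nat_add)
    also have "\<dots> \<le> of_nat ((\<Sum>ij\<in>IU d r. cnt (Phi0 \<omega>) (sq d ij) * (if cnt (Psi \<omega>) (VA d ij) = 0 then 1 else 0))
                         + (\<Sum>ij\<in>IU d r. cnt (Phi0 \<omega>) (sq d ij) * (if cnt (Psi \<omega>) (VB d ij) = 0 then 1 else 0)))"
      using cA cB by (intro of_nat_mono add_mono)
    also have "\<dots> = SA \<omega> + SB \<omega>" unfolding of_nat_add conv SA_def SB_def ..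
    finally show ?thesis .
  qed
  have mA: "SA \<in> borel_measurable M" unfolding SA_def
    by (intro borel_measurable_sum) (auto simp: ennreal_mult' intro!: borel_measurable_times_ennreal meas1 meas2 sq_borel sq_bounded[OF d] V_borel)
  have mB: "SB \<in> borel_measurable M" unfolding SB_def
    by (intro borel_measurable_sum) (auto simp: ennreal_mult' intro!: borel_measurable_times_ennreal meas1 meas2 sq_borel sq_bounded[OF d] V_borel)
  have "EN + EN' \<le> (\<integral>\<^sup>+\<omega>. of_nat (deg_basic r (insert 0 (Phi0 \<omega>)) (Psi \<omega>)) + of_nat (deg_enh r (insert 0 (Phi0 \<omega>)) (Psi \<omega>)) \<partial>M)"
    by (rule nn_integral_superadd)
  also have "\<dots> \<le> (\<integral>\<^sup>+\<omega>. SA \<omega> + SB \<omega> \<partial>M)"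
    by (rule nn_integral_mono) (rule pw)
  also have "\<dots> = (\<integral>\<^sup>+\<omega>. SA \<omega> \<partial>M) + (\<integral>\<^sup>+\<omega>. SB \<omega> \<partial>M)"
    by (rule nn_integral_add[OF mA mB])
  also have "\<dots> = ennreal (\<Sum>ij\<in>IU d r. d^2 * exp (- (lam * (pi * (max 0 (vr d ij))^2)))) + ennreal (\<Sum>ij\<in>IU d r. d^2 * exp (- (lam * (pi * (max 0 (vr d ij))^2))))"
  proof -
    have iA: "(\<integral>\<^sup>+\<omega>. SA \<omega> \<partial>M) = (\<Sum>ij\<in>IU d r. ennreal (d^2 * exp (- (lam * measure lborel (VA d ij)))))"
      unfolding SA_def by (rule upper_one[OF d V_borel(1) V_borel(2)])
    have iB: "(\<integral>\<^sup>+\<omega>. SB \<omega> \<partial>M) = (\<Sum>ij\<in>IU d r. ennreal (d^2 * exp (- (lam * measure lborel (VB d ij)))))"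
      unfolding SB_def by (rule upper_one[OF d V_borel(3) V_borel(4)])
    show ?thesis unfolding iA iB by (simp add: V_measure)
  qed
  also have "\<dots> = ennreal (2 * (\<Sum>ij\<in>IU d r. d^2 * exp (- (lam * (pi * (max 0 (vr d ij))^2)))))"
    by (simp add: ennreal_plus[symmetric] sum_nonneg del: ennreal_plus)
  finally show ?thesis .
qed

end


definition IL :: "real \<Rightarrow> real \<Rightarrow> (int \<times> int) set" where
  "IL d r = {ij \<in> idx d r. sq d ij \<subseteq> cball 0 r \<and> ij \<noteq> (0,0)}"

lemma finite_IL: "finite (IL d r)" using finite_idx by (simp add: IL_def)

lemma crn_in_sq: "d > 0 \<Longrightarrow> crn d ij \<in> sq d ij"
  by (simp add: sq_def crn_def algebra_simps)

lemma zero_sq: assumes d: "d > 0" and "0 \<in> sq d ij" shows "ij = (0,0)"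
proof -
  have "fl d 0 = ij" using assms sq_iff[OF d] by blast
  then show ?thesis by (simp add: fl_def)
qed

lemma aa_gt_pi: "aa > pi"
proof -
  have "sqrt 3 > 0" by simp
  then show ?thesis using pi_gt_zero unfolding aa_def by linarith
qed

lemma Rb_vr: assumes d: "d > 0" and g: "norm (crn d ij) \<le> r"
  shows "(Rb d ij)^2 - (max 0 (vr d ij))^2 \<le> 16*d*r + 64*d^2"
proof (cases "norm (crn d ij) \<ge> 4*d")
  case True
  then have m: "max 0 (vr d ij) = norm (crn d ij) - 4*d" by (simp add: vr_def)
  have "(Rb d ij)^2 - (max 0 (vr d ij))^2 = 16*d*norm (crn d ij)"
    unfolding m Rb_def by (simp add: power2_eq_square algebra_simps)
  also have "\<dots> \<le> 16*d*r" using g d by simp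
  moreover have "0 \<le> 64*d^2" by simp
  ultimately show ?thesis by linarith
next
  case False
  then have "max 0 (vr d ij) = 0" by (simp add: vr_def)
  moreover have "(Rb d ij)^2 \<le> (8*d)^2" using False d by (intro power_mono) (auto simp: Rb_def)
  moreover have "0 \<le> r" using g norm_ge_zero[of "crn d ij"] by linarith
  then have "0 \<le> 16*d*r" using d by simp
  ultimately show ?thesis by (simp add: power2_eq_square)
qed

lemma IU_sub:
  assumes d: "d > 0" and s: "s > 1" and dr: "4*d \<le> r - r/s" and ij: "ij \<in> IU (s*d) r" and ne: "ij \<noteq> (0,0)"
  shows "ij \<in> IL d r"
proof -
  have sd: "s*d > 0" using s d by simp
  have r0: "r \<ge> 0"
  proof -
    have "r - r/s = r * (1 - 1/s)" by (simp add: algebra_simps)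
    moreover have "1 - 1/s > 0" using s by simp
    moreover have "r - r/s > 0" using dr d by linarith
    ultimately show ?thesis by (simp add: zero_less_mult_iff)
  qed
  have i1: "ij \<in> idx (s*d) r" using ij by (simp add: IU_def)
  have "\<lceil>r/(s*d)\<rceil> \<le> \<lceil>r/d\<rceil>"
  proof (rule ceiling_mono)
    have "r/(s*d) = (r/d)/s" by simp
    also have "\<dots> \<le> r/d"
    proof -
      have "r/d \<ge> 0" using r0 d by simp
      then have "(r/d) * 1 \<le> (r/d) * s" using s by (intro mult_left_mono) auto
      then show ?thesis using pos_divide_le_eq[of s "r/d" "r/d"] s by simp
    qed
    finally show "r/(s*d) \<le> r/d" .
  qed
  then have i2: "ij \<in> idx d r" using i1 by (auto simp: idx_def)
  obtain y' where y': "y' \<in> sq (s*d) ij" "norm y' \<le> r" using ij by (auto simp: IU_def)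
  have "norm (crn (s*d) ij) \<le> norm y' + 2*(s*d)"
    using sq_crn[OF sd y'(1)] norm_triangle_sub[of "crn (s*d) ij" y'] by (simp add: norm_minus_commute)
  then have "s * norm (crn d ij) \<le> r + 2*(s*d)" using y'(2) s by (simp add: crn_scale)
  then have g: "norm (crn d ij) \<le> r/s + 2*d" using s by (simp add: field_simps)
  have "sq d ij \<subseteq> cball 0 r"
  proof
    fix y assume "y \<in> sq d ij"
    then have "norm (y - crn d ij) \<le> 2*d" by (rule sq_crn[OF d])
    then have "norm y \<le> norm (crn d ij) + 2*d"
      using norm_triangle_sub[of y "crn d ij"] by linarith
    then show "y \<in> cball 0 r" using g dr by simp
  qed
  then show ?thesis using i2 ne by (simp add: IL_def)
qed

lemma vr_scale: assumes s: "s > 0" shows "max 0 (vr (s*d) ij) = s * max 0 (vr d ij)"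
proof -
  have c: "norm (crn (s*d) ij) = s * norm (crn d ij)" using crn_scale[of s d ij] s by simp
  have v: "vr (s*d) ij = s * vr d ij" unfolding vr_def c by (simp add: algebra_simps)
  show ?thesis
  proof (cases "vr d ij \<ge> 0")
    case True then show ?thesis using s by (simp add: v)
  next
    case False
    then have "s * vr d ij < 0" using s by (simp add: mult_pos_neg)
    then show ?thesis using False by (simp add: v)
  qed
qed

lemma sum_compare:
  assumes d: "d > 0" and s: "s > 1" and ps: "pi * s^2 = aa" and dr: "4*d \<le> r - r/s" and lam: "lam > 0"
  shows "(\<Sum>ij\<in>IU (s*d) r. (s*d)^2 * exp (- (lam * (pi * (max 0 (vr (s*d) ij))^2))))
         \<le> s^2*d^2 * (exp (lam*aa*(16*d*r + 64*d^2)) * (\<Sum>ij\<in>IL d r. exp (- (lam * aa * (Rb d ij)^2))) + 1)"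
proof -
  define T where "T ij = s^2*d^2 * exp (- (lam * aa * (max 0 (vr d ij))^2))" for ij
  define K where "K = exp (lam*aa*(16*d*r + 64*d^2))"
  have aa0: "aa > 0" using aa_gt_pi pi_gt_zero by linarith
  have Teq: "(s*d)^2 * exp (- (lam * (pi * (max 0 (vr (s*d) ij))^2))) = T ij" for ij
  proof -
    have "lam * (pi * (max 0 (vr (s*d) ij))^2) = lam * (pi * s^2) * (max 0 (vr d ij))^2"
      using s by (simp only: vr_scale power_mult_distrib; simp add: algebra_simps)
    also have "\<dots> = lam * aa * (max 0 (vr d ij))^2" by (simp only: ps)
    finally have "lam * (pi * (max 0 (vr (s*d) ij))^2) = lam * aa * (max 0 (vr d ij))^2" .
    then show ?thesis by (simp add: T_def power_mult_distrib)
  qed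
  have T0: "T ij \<ge> 0" for ij by (simp add: T_def)
  have "(\<Sum>ij\<in>IU (s*d) r. (s*d)^2 * exp (- (lam * (pi * (max 0 (vr (s*d) ij))^2)))) = (\<Sum>ij\<in>IU (s*d) r. T ij)"
    by (simp add: Teq)
  also have "\<dots> \<le> (\<Sum>ij\<in>insert (0,0) (IL d r). T ij)"
  proof (rule sum_mono2)
    show "finite (insert (0,0) (IL d r))" by (simp add: finite_IL)
    show "IU (s*d) r \<subseteq> insert (0,0) (IL d r)" using IU_sub[OF d s dr] by blast
  qed (rule T0)
  also have "\<dots> = T (0,0) + (\<Sum>ij\<in>IL d r. T ij)"
    by (rule sum.insert) (simp_all add: finite_IL, simp add: IL_def)
  also have "T (0,0) \<le> s^2*d^2"
  proof -
    have "exp (- (lam * aa * (max 0 (vr d (0,0)))^2)) \<le> 1" using lam aa0 by simp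
    then have "s^2*d^2 * exp (- (lam * aa * (max 0 (vr d (0,0)))^2)) \<le> s^2*d^2 * 1" by (intro mult_left_mono) auto
    then show ?thesis by (simp add: T_def)
  qed
  also have "(\<Sum>ij\<in>IL d r. T ij) \<le> (\<Sum>ij\<in>IL d r. s^2*d^2 * (K * exp (- (lam * aa * (Rb d ij)^2))))"
  proof (rule sum_mono)
    fix ij assume ij: "ij \<in> IL d r"
    then have "crn d ij \<in> cball 0 r" using crn_in_sq[OF d, of ij] by (auto simp: IL_def)
    then have "norm (crn d ij) \<le> r" by simp
    from Rb_vr[OF d this] have "lam*aa*((Rb d ij)^2 - (max 0 (vr d ij))^2) \<le> lam*aa*(16*d*r + 64*d^2)"
      using lam aa0 by (intro mult_left_mono) auto
    then have "- (lam * aa * (max 0 (vr d ij))^2) \<le> lam*aa*(16*d*r + 64*d^2) + - (lam * aa * (Rb d ij)^2)"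
      by (simp add: algebra_simps)
    then have "exp (- (lam * aa * (max 0 (vr d ij))^2)) \<le> K * exp (- (lam * aa * (Rb d ij)^2))"
      unfolding K_def exp_add[symmetric] by simp
    then show "T ij \<le> s^2*d^2 * (K * exp (- (lam * aa * (Rb d ij)^2)))"
      unfolding T_def by (intro mult_left_mono) auto
  qed
  also have "s^2*d^2 + (\<Sum>ij\<in>IL d r. s^2*d^2 * (K * exp (- (lam * aa * (Rb d ij)^2))))
      = s^2*d^2 * (K * (\<Sum>ij\<in>IL d r. exp (- (lam * aa * (Rb d ij)^2))) + 1)"
    by (simp add: sum_distrib_left algebra_simps)
  finally show ?thesis by (simp add: K_def)
qed

definition s0 :: real where "s0 = sqrt (aa / pi)"

lemma s0_props: "s0 > 1" "pi * s0^2 = aa"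
proof -
  have "aa / pi > 1" using aa_gt_pi pi_gt_zero by simp
  then show "s0 > 1" by (simp add: s0_def)
  have "aa > 0" using aa_gt_pi pi_gt_zero by linarith
  then have "aa / pi \<ge> 0" using pi_gt_zero by simp
  then show "pi * s0^2 = aa" by (simp add: s0_def)
qed

lemma exp_bound_aux: "(x::real) \<ge> 0 \<Longrightarrow> x \<le> (1 - exp (- x)) * (1 + x)"
proof -
  assume x: "x \<ge> 0"
  have "1 + x \<le> exp x" by (rule exp_ge_add_one_self)
  then have "exp (-x) * (1 + x) \<le> exp (-x) * exp x" by (intro mult_left_mono) auto
  then have "exp (-x) * (1 + x) \<le> 1" by (simp add: exp_minus)
  then show ?thesis by (simp add: algebra_simps)
qed

context PPsys
begin

definition dd0 where "dd0 = (r - r/s0)/4"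

lemma dd0_pos: "dd0 > 0"
proof -
  have "r/s0 < r" using s0_props(1) r by (simp add: divide_less_eq)
  then show ?thesis by (simp add: dd0_def)
qed

abbreviation "SL d \<equiv> (\<Sum>ij\<in>IL d r. exp (- (lam * aa * (Rb d ij)^2)))"
abbreviation "KK d \<equiv> exp (lam*aa*(16*d*r + 64*d^2))"

lemma bounds:
  assumes d: "d > 0" "d \<le> dd0"
  shows "EN + EN' \<le> ennreal (2 * (s0^2*d^2 * (KK d * SL d + 1)))"
    and "ennreal ((1 - exp (-(d^2))) * SL d) \<le> EN"
proof -
  have dr: "4*d \<le> r - r/s0" using d by (simp add: dd0_def)
  have sd: "s0*d > 0" using s0_props(1) d by simp
  have "EN + EN' \<le> ennreal (2 * (\<Sum>ij\<in>IU (s0*d) r. (s0*d)^2 * exp (- (lam * (pi * (max 0 (vr (s0*d) ij))^2)))))"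
    by (rule upper_E[OF sd])
  also have "\<dots> \<le> ennreal (2 * (s0^2*d^2 * (KK d * SL d + 1)))"
    using sum_compare[OF d(1) s0_props(1) s0_props(2) dr lam] by (intro ennreal_leI mult_left_mono) simp_all
  finally show "EN + EN' \<le> ennreal (2 * (s0^2*d^2 * (KK d * SL d + 1)))" .
  show "ennreal ((1 - exp (-(d^2))) * SL d) \<le> EN"
  proof (rule lower_E[OF d(1) finite_IL])
    fix ij assume "ij \<in> IL d r"
    then show "sq d ij \<subseteq> cball 0 r \<and> 0 \<notin> sq d ij" using zero_sq[OF d(1), of ij] by (auto simp: IL_def)
  qed
qed

lemma EN_le: "EN \<le> EN'"
proof (rule nn_integral_mono)
  fix \<omega> assume w: "\<omega> \<in> space M"
  have "finite (Phi0 \<omega> \<inter> cball 0 r)" using lf1[OF w] by (simp add: lfin_def)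
  moreover have "{y \<in> insert 0 (Phi0 \<omega>). dir_edge r (Psi \<omega>) 0 y \<or> dir_edge r (Psi \<omega>) y 0} \<subseteq> Phi0 \<omega> \<inter> cball 0 r"
    by (auto simp: dir_edge_def dist_norm norm_minus_commute)
  ultimately have "finite {y \<in> insert 0 (Phi0 \<omega>). dir_edge r (Psi \<omega>) 0 y \<or> dir_edge r (Psi \<omega>) y 0}"
    using finite_subset by blast
  then have "deg_basic r (insert 0 (Phi0 \<omega>)) (Psi \<omega>) \<le> deg_enh r (insert 0 (Phi0 \<omega>)) (Psi \<omega>)"
    unfolding deg_basic_def deg_enh_def by (rule card_mono) auto
  then show "(of_nat (deg_basic r (insert 0 (Phi0 \<omega>)) (Psi \<omega>)) :: ennreal) \<le> of_nat (deg_enh r (insert 0 (Phi0 \<omega>)) (Psi \<omega>))"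
    by (rule of_nat_mono)
qed

lemma SL_pos: assumes d: "d > 0" "4*d \<le> r" shows "SL d > 0"
proof -
  have c: "norm (crn d (1,1)) \<le> 2*d"
  proof -
    have "norm (crn d (1,1)) = sqrt (d^2 + d^2)" by (simp add: crn_def norm2)
    also have "\<dots> \<le> sqrt ((2*d)^2)" by (intro real_sqrt_le_mono) (simp add: power2_eq_square)
    also have "\<dots> = 2*d" by (subst real_sqrt_abs) (use d in simp)
    finally show ?thesis .
  qed
  have "sq d (1,1) \<subseteq> cball 0 r"
  proof
    fix y assume "y \<in> sq d (1,1)"
    then have "norm (y - crn d (1,1)) \<le> 2*d" by (rule sq_crn[OF d(1)])
    then have "norm y \<le> 4*d" using c norm_triangle_sub[of y "crn d (1,1)"] by linarith
    then show "y \<in> cball 0 r" using d by simp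
  qed
  moreover have "\<lceil>r/d\<rceil> \<ge> 0"
  proof -
    have "r/d > 0" using d r by simp
    then show ?thesis by simp
  qed
  moreover have "(1,1) \<in> idx d r"
    unfolding idx_def using \<open>\<lceil>r/d\<rceil> \<ge> 0\<close> by (simp only: mem_Times_iff atLeastAtMost_iff fst_conv snd_conv; linarith)
  ultimately have "(1,1) \<in> IL d r" by (simp add: IL_def)
  then show ?thesis by (intro sum_pos2[OF finite_IL]) auto
qed

lemma c0_eq: "3 * pi / (5 * pi + 3 * sqrt 3) * (2 * s0^2 - 1) = 1"
proof -
  have "s0^2 = aa / pi" using s0_props(2) pi_gt_zero by (simp add: field_simps)
  moreover have "5 * pi + 3 * sqrt 3 > 0" using pi_gt_zero by (simp add: add_pos_nonneg)
  ultimately show ?thesis using pi_gt_zero by (simp add: aa_def field_simps)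
qed

theorem main: "EN / EN' \<ge> ennreal (3 * pi / (5 * pi + 3 * sqrt 3))"
proof -
  have b0: "EN + EN' \<le> ennreal (2 * (s0^2*dd0^2 * (KK dd0 * SL dd0 + 1)))"
    by (rule bounds(1)[OF dd0_pos order_refl])
  then have "EN + EN' < top" using ennreal_less_top le_less_trans by blast
  then have fin: "EN < top" "EN' < top" by simp_all
  define n where "n = enn2real EN"
  define n' where "n' = enn2real EN'"
  have En: "EN = ennreal n" "EN' = ennreal n'" using fin by (simp_all add: n_def n'_def)
  have n0: "n \<ge> 0" "n' \<ge> 0" by (simp_all add: n_def n'_def)
  have key: "n + n' \<le> 2* s0^2*(KK d * n * (1 + d^2) + d^2)" if d: "0 < d" "d \<le> dd0" for d
  proof -
    have SL0: "SL d \<ge> 0" by (intro sum_nonneg) simp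
    have "ennreal (n + n') \<le> ennreal (2 * (s0^2*d^2 * (KK d * SL d + 1)))"
      using bounds(1)[OF d] En n0 by (simp add: ennreal_plus[symmetric] del: ennreal_plus)
    then have u: "n + n' \<le> 2 * (s0^2*d^2 * (KK d * SL d + 1))"
      by (subst (asm) ennreal_le_iff) (auto intro!: mult_nonneg_nonneg add_nonneg_nonneg SL0)
    have "ennreal ((1 - exp (-(d^2))) * SL d) \<le> ennreal n" using bounds(2)[OF d] En by simp
    then have l: "(1 - exp (-(d^2))) * SL d \<le> n" using n0 by simp
    have "d^2 * SL d \<le> ((1 - exp (-(d^2))) * (1 + d^2)) * SL d"
      by (intro mult_right_mono exp_bound_aux SL0) simp
    also have "\<dots> = ((1 - exp (-(d^2))) * SL d) * (1 + d^2)" by (simp add: algebra_simps)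
    also have "\<dots> \<le> n * (1 + d^2)" by (intro mult_right_mono l) simp
    finally have m: "d^2 * SL d \<le> n * (1 + d^2)" .
    have "2 * (s0^2*d^2 * (KK d * SL d + 1)) = 2* s0^2*(KK d * (d^2 * SL d) + d^2)" by (simp add: algebra_simps)
    also have "\<dots> \<le> 2* s0^2*(KK d * (n * (1 + d^2)) + d^2)"
      by (intro mult_left_mono add_mono m order_refl) simp_all
    finally show ?thesis using u by (simp add: algebra_simps)
  qed
  have lim: "((\<lambda>d. 2* s0^2*(KK d * n * (1 + d^2) + d^2)) \<longlongrightarrow>
              2* s0^2*(exp (lam*aa*(16*0*r + 64*0^2)) * n * (1 + 0^2) + 0^2)) (at_right 0)"
    by (intro tendsto_intros tendsto_ident_at)
  have ev: "eventually (\<lambda>d. n + n' \<le> 2* s0^2*(KK d * n * (1 + d^2) + d^2)) (at_right 0)"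
    using eventually_at_right_real[OF dd0_pos] by eventually_elim (auto intro: key)
  have nn: "n + n' \<le> 2* s0^2*n"
    using tendsto_le[OF trivial_limit_at_right_real lim tendsto_const ev] by simp
  have npos: "n > 0"
  proof -
    have d4: "4*dd0 \<le> r" using s0_props(1) r by (simp add: dd0_def)
    have "0 < (1 - exp (-(dd0^2))) * SL dd0"
      using SL_pos[OF dd0_pos d4] dd0_pos by (intro mult_pos_pos) simp_all
    moreover have "ennreal ((1 - exp (-(dd0^2))) * SL dd0) \<le> ennreal n" using bounds(2)[OF dd0_pos order_refl] En by simp
    ultimately show ?thesis using n0 by simp
  qed
  have "ennreal n \<le> ennreal n'" using EN_le En by simp
  then have nn': "n \<le> n'" using n0 by simp
  define c0 where "c0 = 3 * pi / (5 * pi + 3 * sqrt 3)"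
  have c00: "c0 \<ge> 0" unfolding c0_def using pi_gt_zero by (intro divide_nonneg_pos) (auto intro: add_pos_nonneg)
  have "n' \<le> (2* s0^2 - 1) * n" using nn by (simp add: algebra_simps)
  then have "c0 * n' \<le> c0 * ((2* s0^2 - 1) * n)" using c00 by (rule mult_left_mono)
  also have "\<dots> = (c0 * (2 * s0^2 - 1)) * n" by (simp only: mult.assoc)
  also have "\<dots> = n" unfolding c0_def by (simp only: c0_eq mult_1_left)
  finally have "c0 * n' \<le> n" .
  then have "c0 \<le> n / n'" using npos nn' by (simp add: le_divide_eq)
  then have "ennreal c0 \<le> ennreal (n / n')" by (rule ennreal_leI)
  also have "ennreal (n / n') = ennreal n / ennreal n'" using npos nn' n0 by (simp add: divide_ennreal)
  finally show ?thesis by (simp add: En c0_def)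
qed

end


theorem fact4:
  fixes M :: "'o measure" and Phi0 Psi :: "'o \<Rightarrow> pt set" and lam r :: real
  assumes "prob_space M"
    and "lam > 0" and "r > 0"
    and "poisson_counts M Phi0 1"
    and "poisson_counts M Psi lam"
    and "indep_counts M Phi0 Psi"
  shows "(\<integral>\<^sup>+\<omega>. of_nat (deg_basic r (insert 0 (Phi0 \<omega>)) (Psi \<omega>)) \<partial>M)
           / (\<integral>\<^sup>+\<omega>. of_nat (deg_enh r (insert 0 (Phi0 \<omega>)) (Psi \<omega>)) \<partial>M)
         \<ge> ennreal (3 * pi / (5 * pi + 3 * sqrt 3))"
  proof -
  interpret PPsys M Phi0 Psi lam r
    by (rule PPsys.intro[OF assms])
  show ?thesis by (rule main)
qed

end
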